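(* Let $f:\mathbb{C}^2\times\mathbb{R}\to\mathbb{C}$ be such that $f(\cdot,t)$ is holomorphic for each $t$, and $f$ is of class $C^3$ jointly in $(\operatorname{Re}Z,\operatorname{Im}Z,t)$. Let $\mathcal{V}:[0,\infty)\to\mathbb{C}^2$ be continuously differentiable, $Z_0\in\mathbb{C}^2$, $s\in\{s^+,s^-\}$. For $\varepsilon>0$ and integers $n\ge0$ define $$Y_\varepsilon(n\varepsilon)=\frac14\sum_{j=1}^4 f\big(Z^j_\varepsilon(n\varepsilon),n\varepsilon\big).$$ Then for every $T>0$ there is $C$ such that for all $\varepsilon\in(0,1]$ and all integers $q\ge1$ with $4q\varepsilon\le T$, setting $t=4q\varepsilon$, $$\Big|Y_\varepsilon(t)-Y_\varepsilon(t-\varepsilon)-\varepsilon\,(Df)\big(\widetilde Z_\varepsilon(t),t\big)\Big|\le C\varepsilon^2,$$ where $D$ is the complex Dynkin operator $D f=\frac{\partial f}{\partial t}+\mathcal{V}(t)\cdot\nabla f-i\frac{\hbar}{2m}\Delta f$. The same holds with $\widetilde Z_\varepsilon(t)$ replaced by the classical trajectory $\widetilde Z(t)$ solving $\dot{\widetilde Z}=\mathcal{V}$, $\widetilde Z(0)=Z_0$.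
   Context: Fix constants $\hbar>0$, $m>0$. In $\mathbb{R}^2$ let $u^1=(1,1)$, $u^2=(1,-1)$, $u^3=(-1,-1)$, $u^4=(-1,1)$. Let $s^+$ be the cyclic permutation $u^1\mapsto u^2\mapsto u^3\mapsto u^4\mapsto u^1$ and $s^-=(s^+)^{-1}$; $s^k$ denotes the $k$-th iterate. For $\varepsilon>0$ put $\gamma=(1+i)\sqrt{\hbar\varepsilon/(4m)}$. Given $\mathcal{V}$ and $Z_0$, define $Z^j_\varepsilon(0)=Z_0$ and for $n\ge1$, $n=4q+r$ ($0\le r\le3$): $Z^j_\varepsilon(n\varepsilon)=Z^j_\varepsilon((n-1)\varepsilon)+\mathcal{V}(4q\varepsilon)\varepsilon+\gamma(s^nu^j-s^{n-1}u^j)$, $j=1,\dots,4$; and $\widetilde Z_\varepsilon(0)=Z_0$, $\widetilde Z_\varepsilon(n\varepsilon)=\widetilde Z_\varepsilon((n-1)\varepsilon)+\mathcal{V}(4q\varepsilon)\varepsilon$. For a function holomorphic in $Z=(z_1,z_2)$: $\nabla f=(\partial f/\partial z_1,\partial f/\partial z_2)$ (complex derivatives), $\Delta f=\partial^2 f/\partial z_1^2+\partial^2 f/\partial z_2^2$, and for $a,b\in\mathbb{C}^2$, $a\cdot b=a_1b_1+a_2b_2$ (no conjugation). *)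

theory Defs
  imports "HOL-Analysis.Analysis"
begin

definition u :: "nat \<Rightarrow> real \<times> real" where
  "u j = (if j = 1 then (1, 1) else if j = 2 then (1, -1)
          else if j = 3 then (-1, -1) else (-1, 1))"

definition splus :: "real \<times> real \<Rightarrow> real \<times> real" where
  "splus x = (if x = u 1 then u 2 else if x = u 2 then u 3
              else if x = u 3 then u 4 else if x = u 4 then u 1 else x)"

definition sminus :: "real \<times> real \<Rightarrow> real \<times> real" where
  "sminus = inv splus"

definition gam :: "real \<Rightarrow> real \<Rightarrow> real \<Rightarrow> complex" where
  "gam hbar m eps = (1 + \<i>) * complex_of_real (sqrt (hbar * eps / (4 * m)))"

definition cscale :: "complex \<Rightarrow> real \<times> real \<Rightarrow> complex \<times> complex" where
  "cscale c x = (c * complex_of_real (fst x), c * complex_of_real (snd x))"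

text \<open>Zeps ... j n is Z^j_eps(n eps).\<close>
primrec Zeps :: "real \<Rightarrow> real \<Rightarrow> (real \<Rightarrow> complex \<times> complex) \<Rightarrow> complex \<times> complex
    \<Rightarrow> (real \<times> real \<Rightarrow> real \<times> real) \<Rightarrow> real \<Rightarrow> nat \<Rightarrow> nat \<Rightarrow> complex \<times> complex" where
  "Zeps hbar m V Z0 s eps j 0 = Z0"
| "Zeps hbar m V Z0 s eps j (Suc n) =
     Zeps hbar m V Z0 s eps j n + eps *\<^sub>R V (real (4 * (Suc n div 4)) * eps)
     + cscale (gam hbar m eps) ((s ^^ Suc n) (u j) - (s ^^ n) (u j))"

text \<open>Ztil V Z0 eps n is the tilde-Z_eps(n eps).\<close>
primrec Ztil :: "(real \<Rightarrow> complex \<times> complex) \<Rightarrow> complex \<times> complex \<Rightarrow> real \<Rightarrow> nat \<Rightarrow> complex \<times> complex" where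
  "Ztil V Z0 eps 0 = Z0"
| "Ztil V Z0 eps (Suc n) = Ztil V Z0 eps n + eps *\<^sub>R V (real (4 * (Suc n div 4)) * eps)"

definition Yeps :: "real \<Rightarrow> real \<Rightarrow> (real \<Rightarrow> complex \<times> complex) \<Rightarrow> complex \<times> complex
    \<Rightarrow> (real \<times> real \<Rightarrow> real \<times> real) \<Rightarrow> ((complex \<times> complex) \<times> real \<Rightarrow> complex)
    \<Rightarrow> real \<Rightarrow> nat \<Rightarrow> complex" where
  "Yeps hbar m V Z0 s f eps n =
     (1/4) * (\<Sum>j\<in>{1..4}. f (Zeps hbar m V Z0 s eps j n, real n * eps))"

text \<open>f(., t) holomorphic on C^2: complex-Frechet differentiable (C-linear differential).\<close>
definition holo2 :: "(complex \<times> complex \<Rightarrow> complex) \<Rightarrow> bool" where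
  "holo2 g \<longleftrightarrow> (\<forall>Z. \<exists>D1 D2. (g has_derivative (\<lambda>h. D1 * fst h + D2 * snd h)) (at Z))"

definition C3 :: "('a::real_normed_vector \<Rightarrow> 'b::real_normed_vector) \<Rightarrow> bool" where
  "C3 g \<longleftrightarrow> (\<exists>(g1 :: 'a \<Rightarrow> 'a \<Rightarrow>\<^sub>L 'b) (g2 :: 'a \<Rightarrow> 'a \<Rightarrow>\<^sub>L ('a \<Rightarrow>\<^sub>L 'b))
      (g3 :: 'a \<Rightarrow> 'a \<Rightarrow>\<^sub>L ('a \<Rightarrow>\<^sub>L ('a \<Rightarrow>\<^sub>L 'b))).
      (\<forall>x. (g has_derivative blinfun_apply (g1 x)) (at x)) \<and>
      (\<forall>x. (g1 has_derivative blinfun_apply (g2 x)) (at x)) \<and>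
      (\<forall>x. (g2 has_derivative blinfun_apply (g3 x)) (at x)) \<and>
      continuous_on UNIV g3)"

definition d1 :: "((complex \<times> complex) \<times> real \<Rightarrow> complex) \<Rightarrow> complex \<times> complex \<Rightarrow> real \<Rightarrow> complex" where
  "d1 f Z t = deriv (\<lambda>w. f ((w, snd Z), t)) (fst Z)"

definition d2 :: "((complex \<times> complex) \<times> real \<Rightarrow> complex) \<Rightarrow> complex \<times> complex \<Rightarrow> real \<Rightarrow> complex" where
  "d2 f Z t = deriv (\<lambda>w. f ((fst Z, w), t)) (snd Z)"

definition d11 :: "((complex \<times> complex) \<times> real \<Rightarrow> complex) \<Rightarrow> complex \<times> complex \<Rightarrow> real \<Rightarrow> complex" where
  "d11 f Z t = deriv (\<lambda>w. deriv (\<lambda>w'. f ((w', snd Z), t)) w) (fst Z)"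

definition d22 :: "((complex \<times> complex) \<times> real \<Rightarrow> complex) \<Rightarrow> complex \<times> complex \<Rightarrow> real \<Rightarrow> complex" where
  "d22 f Z t = deriv (\<lambda>w. deriv (\<lambda>w'. f ((fst Z, w'), t)) w) (snd Z)"

definition dt :: "((complex \<times> complex) \<times> real \<Rightarrow> complex) \<Rightarrow> complex \<times> complex \<Rightarrow> real \<Rightarrow> complex" where
  "dt f Z t = vector_derivative (\<lambda>\<tau>. f (Z, \<tau>)) (at t)"

definition Dyn :: "real \<Rightarrow> real \<Rightarrow> (real \<Rightarrow> complex \<times> complex)
    \<Rightarrow> ((complex \<times> complex) \<times> real \<Rightarrow> complex) \<Rightarrow> complex \<times> complex \<Rightarrow> real \<Rightarrow> complex" where
  "Dyn hbar m V f Z t = dt f Z t + (fst (V t) * d1 f Z t + snd (V t) * d2 f Z t)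
     - \<i> * complex_of_real (hbar / (2 * m)) * (d11 f Z t + d22 f Z t)"

end

theory Submission
  imports Defs "HOL-Complex_Analysis.Complex_Analysis"
begin

lemma lip_blin:
  fixes G :: "'a::real_normed_vector \<Rightarrow> 'b::real_normed_vector"
  assumes S: "convex S" and d: "\<And>x. (G has_derivative blinfun_apply (G' x)) (at x)"
    and B: "\<And>x. x \<in> S \<Longrightarrow> norm (G' x) \<le> B" and x: "x \<in> S" and y: "y \<in> S"
  shows "norm (G y - G x) \<le> B * norm (y - x)"
  using differentiable_bound[OF S, of G "\<lambda>x. blinfun_apply (G' x)" B y x]
    d B x y by (auto simp: norm_blinfun.rep_eq[symmetric] intro: has_derivative_at_withinI)

lemma T2:
  fixes F :: "'a::real_normed_vector \<Rightarrow> 'b::real_normed_vector"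
  assumes S: "convex S" and d1: "\<And>x. (F has_derivative blinfun_apply (F1 x)) (at x)"
    and d2: "\<And>x. (F1 has_derivative blinfun_apply (F2 x)) (at x)"
    and B: "\<And>x. x \<in> S \<Longrightarrow> norm (F2 x) \<le> B" and x: "x \<in> S" and y: "y \<in> S"
  shows "norm (F y - F x - F1 x (y - x)) \<le> B * norm (y - x) ^ 2"
proof -
  have seg: "closed_segment x y \<subseteq> S" using S x y by (simp add: closed_segment_subset)
  have "norm (F y - F x - blinfun_apply (F1 x) (y - x)) \<le> norm (y - x) * (B * norm (y - x))"
  proof (rule differentiable_bound_linearization[where S="closed_segment x y" and ?x0.0=x])
    show "\<And>t. t \<in> {0..1} \<Longrightarrow> x + t *\<^sub>R (y - x) \<in> closed_segment x y"
      by (auto simp: in_segment algebra_simps)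
    show "\<And>z. z \<in> closed_segment x y \<Longrightarrow> (F has_derivative blinfun_apply (F1 z)) (at z within closed_segment x y)"
      using d1 by (auto intro: has_derivative_at_withinI)
    show "x \<in> closed_segment x y" by simp
    fix z assume z: "z \<in> closed_segment x y"
    have "onorm (blinfun_apply (F1 z) - blinfun_apply (F1 x)) = norm (F1 z - F1 x)"
      by (simp add: norm_blinfun.rep_eq minus_blinfun.rep_eq fun_diff_def)
    also have "\<dots> \<le> B * norm (z - x)"
      by (rule lip_blin[OF S d2 B]) (use x seg z in auto)
    also have "\<dots> \<le> B * norm (y - x)"
    proof (rule mult_left_mono)
      show "norm (z - x) \<le> norm (y - x)" using segment_bound[OF z] by (simp add: norm_minus_commute)
      show "0 \<le> B" using B[OF x] norm_ge_zero order_trans by blast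
    qed
    finally show "onorm (blinfun_apply (F1 z) - blinfun_apply (F1 x)) \<le> B * norm (y - x)" .
  qed
  then show ?thesis by (simp add: power2_eq_square mult_ac)
qed

lemma holo_sym2:
  fixes \<psi> :: "complex \<Rightarrow> complex"
  assumes hol: "\<psi> holomorphic_on UNIV" and M: "\<And>w. cmod (w - w0) \<le> r + 1 \<Longrightarrow> cmod (\<psi> w) \<le> M"
    and c: "cmod c \<le> r"
  shows "cmod (\<psi> (w0 + c) + \<psi> (w0 - c) - 2 * \<psi> w0 - c^2 * deriv (deriv \<psi>) w0) \<le> 8 * (M + 1) * cmod c ^ 4"
proof -
  let ?S = "cball w0 r"
  have B4: "cmod ((deriv ^^ Suc 3) \<psi> x) \<le> 24 * (M + 1)" if x: "x \<in> ?S" for x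
  proof -
    have "cmod ((deriv ^^ Suc 3) \<psi> x) \<le> fact (Suc 3) * (M+1) / 1 ^ (Suc 3)"
    proof (rule Cauchy_higher_deriv_bound[where y=0])
      show "\<psi> holomorphic_on ball x 1" using hol by (rule holomorphic_on_subset) auto
      show "continuous_on (cball x 1) \<psi>" using hol holomorphic_on_imp_continuous_on continuous_on_subset by blast
      fix w assume w: "w \<in> ball x 1"
      have "cmod (w - w0) \<le> cmod (w - x) + cmod (x - w0)" using norm_triangle_ineq[of "w-x" "x-w0"] by simp
      also have "\<dots> \<le> r + 1" using w x by (auto simp: dist_norm norm_minus_commute)
      finally have "cmod (\<psi> w) \<le> M" by (rule M)
      then show "\<psi> w \<in> ball 0 (M+1)" by simp
    qed auto
    then show ?thesis by (simp add: fact_numeral)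
  qed
  have tay: "cmod ((deriv ^^ 0) \<psi> z - (\<Sum>i\<le>3. (deriv ^^ i) \<psi> w0 * (z - w0) ^ i / fact i))
       \<le> 24 * (M+1) * cmod (z - w0) ^ Suc 3 / fact 3" if z: "z \<in> ?S" for z
  proof (rule complex_Taylor[where f="\<lambda>i. (deriv ^^ i) \<psi>"])
    show "convex ?S" by simp
    show "w0 \<in> ?S" using c norm_ge_zero[of c] by (simp del: norm_ge_zero)
    show "z \<in> ?S" by (rule z)
    show "\<And>x. x \<in> ?S \<Longrightarrow> cmod ((deriv ^^ Suc 3) \<psi> x) \<le> 24 * (M + 1)" by (rule B4)
    fix i :: nat and x assume "x \<in> ?S" "i \<le> 3"
    have "((deriv ^^ i) \<psi> has_field_derivative deriv ((deriv ^^ i) \<psi>) x) (at x within ?S)"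
      by (rule holomorphic_derivI[of _ UNIV]) (auto intro: holomorphic_higher_deriv hol)
    then show "((deriv ^^ i) \<psi> has_field_derivative (deriv ^^ Suc i) \<psi> x) (at x within ?S)" by simp
  qed
  have z1: "w0 + c \<in> ?S" using c by (simp add: dist_norm)
  have z2: "w0 - c \<in> ?S" using c by (simp add: dist_norm)
  have e1: "cmod (\<psi> (w0+c) - (\<psi> w0 + deriv \<psi> w0 * c + deriv (deriv \<psi>) w0 * c^2 / 2 + (deriv ^^ 3) \<psi> w0 * c^3/6)) \<le> 4 * (M+1) * cmod c ^ 4"
    using tay[OF z1] by (simp add: eval_nat_numeral fact_numeral field_simps)
  have e2: "cmod (\<psi> (w0-c) - (\<psi> w0 - deriv \<psi> w0 * c + deriv (deriv \<psi>) w0 * c^2 / 2 - (deriv ^^ 3) \<psi> w0 * c^3/6)) \<le> 4 * (M+1) * cmod c ^ 4"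
    using tay[OF z2] by (simp add: eval_nat_numeral fact_numeral field_simps)
  have "\<psi> (w0 + c) + \<psi> (w0 - c) - 2 * \<psi> w0 - c^2 * deriv (deriv \<psi>) w0 =
     (\<psi> (w0+c) - (\<psi> w0 + deriv \<psi> w0 * c + deriv (deriv \<psi>) w0 * c^2 / 2 + (deriv ^^ 3) \<psi> w0 * c^3/6))
    + (\<psi> (w0-c) - (\<psi> w0 - deriv \<psi> w0 * c + deriv (deriv \<psi>) w0 * c^2 / 2 - (deriv ^^ 3) \<psi> w0 * c^3/6))"
    by (simp add: field_simps)
  also have "cmod \<dots> \<le> 4 * (M+1) * cmod c ^ 4 + 4 * (M+1) * cmod c ^ 4"
    by (rule order_trans[OF norm_triangle_ineq add_mono[OF e1 e2]])
  finally show ?thesis by (simp add: algebra_simps)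
qed

lemma link1:
  fixes f :: "(complex \<times> complex) \<times> real \<Rightarrow> complex"
  assumes d1: "\<And>x. (f has_derivative blinfun_apply (g1 x)) (at x)"
    and holo: "\<forall>t. holo2 (\<lambda>Z. f (Z, t))"
  shows "blinfun_apply (g1 (Z, t)) ((h1, h2), 0) = d1 f Z t * h1 + d2 f Z t * h2"
proof -
  obtain D1 D2 where D: "((\<lambda>Z. f (Z, t)) has_derivative (\<lambda>h. D1 * fst h + D2 * snd h)) (at Z)"
    using holo unfolding holo2_def by blast
  have G: "((\<lambda>Z. f (Z, t)) has_derivative (\<lambda>h. blinfun_apply (g1 (Z, t)) (h, 0))) (at Z)"
  proof -
    have "((\<lambda>Z. (Z, t)) has_derivative (\<lambda>h. (h, 0))) (at Z)"
      by (auto intro!: derivative_eq_intros)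
    from has_derivative_compose[OF this d1] show ?thesis by (simp add: o_def)
  qed
  have eq: "(\<lambda>h. blinfun_apply (g1 (Z, t)) (h, 0)) = (\<lambda>h. D1 * fst h + D2 * snd h)"
    by (rule has_derivative_unique[OF G D])
  have p1: "((\<lambda>w. (w, snd Z)) has_derivative (\<lambda>h. (h, 0))) (at (fst Z))"
    by (auto intro!: derivative_eq_intros)
  have p2: "((\<lambda>w. (fst Z, w)) has_derivative (\<lambda>h. (0, h))) (at (snd Z))"
    by (auto intro!: derivative_eq_intros)
  have "((\<lambda>w. f ((w, snd Z), t)) has_derivative (\<lambda>h. D1 * h)) (at (fst Z))"
    using has_derivative_compose[OF p1, of "\<lambda>Z. f (Z, t)" "\<lambda>h. D1 * fst h + D2 * snd h"] D
    by (simp add: o_def)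
  then have "d1 f Z t = D1" unfolding d1_def
    by (intro DERIV_imp_deriv) (simp add: has_field_derivative_def)
  moreover have "((\<lambda>w. f ((fst Z, w), t)) has_derivative (\<lambda>h. D2 * h)) (at (snd Z))"
    using has_derivative_compose[OF p2, of "\<lambda>Z. f (Z, t)" "\<lambda>h. D1 * fst h + D2 * snd h"] D
    by (simp add: o_def)
  then have "d2 f Z t = D2" unfolding d2_def
    by (intro DERIV_imp_deriv) (simp add: has_field_derivative_def)
  ultimately show ?thesis using fun_cong[OF eq, of "(h1, h2)"] by simp
qed

lemma link_t:
  fixes f :: "(complex \<times> complex) \<times> real \<Rightarrow> complex"
  assumes d1: "\<And>x. (f has_derivative blinfun_apply (g1 x)) (at x)"
  shows "dt f Z t = blinfun_apply (g1 (Z, t)) ((0, 0), 1)"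
proof -
  have p: "((\<lambda>\<tau>. (Z, \<tau>)) has_derivative (\<lambda>h. (0, h))) (at t)"
    by (auto intro!: derivative_eq_intros)
  have "((\<lambda>\<tau>. f (Z, \<tau>)) has_derivative (\<lambda>h. blinfun_apply (g1 (Z, t)) (0, h))) (at t)"
    using has_derivative_compose[OF p d1] by (simp add: o_def)
  moreover have "(\<lambda>h. blinfun_apply (g1 (Z, t)) (0, h)) = (\<lambda>h. h *\<^sub>R blinfun_apply (g1 (Z, t)) ((0,0), 1))"
  proof
    fix h :: real
    have eq: "((0::complex\<times>complex), h) = h *\<^sub>R ((0,0), 1)" by (simp add: zero_prod_def)
    show "blinfun_apply (g1 (Z, t)) (0, h) = h *\<^sub>R blinfun_apply (g1 (Z, t)) ((0,0), 1)"
      by (simp only: eq blinfun.scaleR_right)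
  qed
  ultimately have "((\<lambda>\<tau>. f (Z, \<tau>)) has_vector_derivative blinfun_apply (g1 (Z, t)) ((0,0), 1)) (at t)"
    by (simp add: has_vector_derivative_def)
  then show ?thesis unfolding dt_def by (rule vector_derivative_at)
qed

lemma holo_psi1:
  fixes f :: "(complex \<times> complex) \<times> real \<Rightarrow> complex"
  assumes d1: "\<And>x. (f has_derivative blinfun_apply (g1 x)) (at x)"
    and holo: "\<forall>t. holo2 (\<lambda>Z. f (Z, t))"
  shows "(\<lambda>w. f ((w, z2), t)) holomorphic_on UNIV" "(\<lambda>w. f ((z1, w), t)) holomorphic_on UNIV"
proof -
  have "((\<lambda>w. f ((w, z2), t)) has_field_derivative d1 f (w,z2) t) (at w)" for w
  proof -
    have p: "((\<lambda>w. ((w, z2), t)) has_derivative (\<lambda>h. ((h, 0), 0))) (at w)"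
      by (auto intro!: derivative_eq_intros)
    show ?thesis using has_derivative_compose[OF p d1] link1[OF d1 holo, of "(w,z2)" t]
      by (simp add: o_def has_field_derivative_def)
  qed
  then show "(\<lambda>w. f ((w, z2), t)) holomorphic_on UNIV"
    using field_differentiable_def holomorphic_on_def field_differentiable_at_within by blast
  have "((\<lambda>w. f ((z1, w), t)) has_field_derivative d2 f (z1,w) t) (at w)" for w
  proof -
    have p: "((\<lambda>w. ((z1, w), t)) has_derivative (\<lambda>h. ((0, h), 0))) (at w)"
      by (auto intro!: derivative_eq_intros)
    show ?thesis using has_derivative_compose[OF p d1] link1[OF d1 holo, of "(z1,w)" t]
      by (simp add: o_def has_field_derivative_def)
  qed
  then show "(\<lambda>w. f ((z1, w), t)) holomorphic_on UNIV"
    using field_differentiable_def holomorphic_on_def field_differentiable_at_within by blast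
qed

lemma link11:
  fixes f :: "(complex \<times> complex) \<times> real \<Rightarrow> complex"
  assumes d1: "\<And>x. (f has_derivative blinfun_apply (g1 x)) (at x)"
    and d2: "\<And>x. (g1 has_derivative blinfun_apply (g2 x)) (at x)"
    and holo: "\<forall>t. holo2 (\<lambda>Z. f (Z, t))"
  shows "d11 f Z t = blinfun_apply (blinfun_apply (g2 (Z, t)) ((1, 0), 0)) ((1, 0), 0)"
proof -
  obtain z1 z2 where Z: "Z = (z1, z2)" by fastforce
  let ?\<psi> = "\<lambda>w. f ((w, z2), t)"
  have dpsi: "deriv ?\<psi> = (\<lambda>w. blinfun_apply (g1 ((w, z2), t)) ((1, 0), 0))"
  proof
    fix w show "deriv ?\<psi> w = blinfun_apply (g1 ((w, z2), t)) ((1, 0), 0)"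
      using link1[OF d1 holo, of "(w, z2)" t 1 0] by (simp add: d1_def)
  qed
  have hol: "deriv ?\<psi> holomorphic_on UNIV"
    by (intro holomorphic_deriv holo_psi1[OF d1 holo]) auto
  have F: "(deriv ?\<psi> has_derivative (\<lambda>h. deriv (deriv ?\<psi>) z1 * h)) (at z1)"
    using holomorphic_derivI[OF hol, of z1 UNIV] by (simp add: has_field_derivative_def)
  have p: "((\<lambda>w. ((w, z2), t)) has_derivative (\<lambda>h. ((h, 0), 0))) (at z1)"
    by (auto intro!: derivative_eq_intros)
  have c: "((\<lambda>w. g1 ((w, z2), t)) has_derivative (\<lambda>h. g2 ((z1, z2), t) ((h, 0), 0))) (at z1)"
    using has_derivative_compose[OF p d2] by (simp add: o_def)
  have G: "((\<lambda>w. blinfun_apply (g1 ((w, z2), t)) ((1, 0), 0)) has_derivative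
      (\<lambda>h. blinfun_apply (blinfun_apply (g2 ((z1, z2), t)) ((h, 0), 0)) ((1, 0), 0))) (at z1)"
    using blinfun.FDERIV[OF c has_derivative_const[of "((1::complex, 0::complex), 0::real)"]] by simp
  have "(\<lambda>h. deriv (deriv ?\<psi>) z1 * h) = (\<lambda>h. blinfun_apply (blinfun_apply (g2 ((z1, z2), t)) ((h, 0), 0)) ((1, 0), 0))"
    by (rule has_derivative_unique[OF F]) (simp add: dpsi G)
  from fun_cong[OF this, of 1] show ?thesis
    by (simp add: Z d11_def)
qed

lemma link22:
  fixes f :: "(complex \<times> complex) \<times> real \<Rightarrow> complex"
  assumes d1: "\<And>x. (f has_derivative blinfun_apply (g1 x)) (at x)"
    and d2: "\<And>x. (g1 has_derivative blinfun_apply (g2 x)) (at x)"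
    and holo: "\<forall>t. holo2 (\<lambda>Z. f (Z, t))"
  shows "d22 f Z t = blinfun_apply (blinfun_apply (g2 (Z, t)) ((0, 1), 0)) ((0, 1), 0)"
proof -
  obtain z1 z2 where Z: "Z = (z1, z2)" by fastforce
  let ?\<psi> = "\<lambda>w. f ((z1, w), t)"
  have dpsi: "deriv ?\<psi> = (\<lambda>w. blinfun_apply (g1 ((z1, w), t)) ((0, 1), 0))"
  proof
    fix w show "deriv ?\<psi> w = blinfun_apply (g1 ((z1, w), t)) ((0, 1), 0)"
      using link1[OF d1 holo, of "(z1, w)" t 0 1] by (simp add: d2_def)
  qed
  have hol: "deriv ?\<psi> holomorphic_on UNIV"
    by (intro holomorphic_deriv holo_psi1[OF d1 holo]) auto
  have F: "(deriv ?\<psi> has_derivative (\<lambda>h. deriv (deriv ?\<psi>) z2 * h)) (at z2)"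
    using holomorphic_derivI[OF hol, of z2 UNIV] by (simp add: has_field_derivative_def)
  have p: "((\<lambda>w. ((z1, w), t)) has_derivative (\<lambda>h. ((0, h), 0))) (at z2)"
    by (auto intro!: derivative_eq_intros)
  have c: "((\<lambda>w. g1 ((z1, w), t)) has_derivative (\<lambda>h. g2 ((z1, z2), t) ((0, h), 0))) (at z2)"
    using has_derivative_compose[OF p d2] by (simp add: o_def)
  have G: "((\<lambda>w. blinfun_apply (g1 ((z1, w), t)) ((0, 1), 0)) has_derivative
      (\<lambda>h. blinfun_apply (blinfun_apply (g2 ((z1, z2), t)) ((0, h), 0)) ((0, 1), 0))) (at z2)"
    using blinfun.FDERIV[OF c has_derivative_const[of "((0::complex, 1::complex), 0::real)"]] by simp
  have "(\<lambda>h. deriv (deriv ?\<psi>) z2 * h) = (\<lambda>h. blinfun_apply (blinfun_apply (g2 ((z1, z2), t)) ((0, h), 0)) ((0, 1), 0))"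
    by (rule has_derivative_unique[OF F]) (simp add: dpsi G)
  from fun_cong[OF this, of 1] show ?thesis
    by (simp add: Z d22_def)
qed

lemma T2gen:
  fixes F :: "'a::real_normed_vector \<Rightarrow> 'b::real_normed_vector"
  assumes S: "convex S" and d: "\<And>z. (F has_derivative F' z) (at z)"
    and x: "x \<in> S" and y: "y \<in> S"
    and B: "\<And>z. z \<in> S \<Longrightarrow> onorm (\<lambda>h. F' z h - F' x h) \<le> B * norm (z - x)" and B0: "0 \<le> B"
  shows "norm (F y - F x - F' x (y - x)) \<le> B * norm (y - x) ^ 2"
proof -
  have seg: "closed_segment x y \<subseteq> S" using S x y by (simp add: closed_segment_subset)
  have "norm (F y - F x - F' x (y - x)) \<le> norm (y - x) * (B * norm (y - x))"
  proof (rule differentiable_bound_linearization[where S="closed_segment x y" and ?x0.0=x])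
    show "\<And>t. t \<in> {0..1} \<Longrightarrow> x + t *\<^sub>R (y - x) \<in> closed_segment x y"
      by (auto simp: in_segment algebra_simps)
    show "\<And>z. z \<in> closed_segment x y \<Longrightarrow> (F has_derivative F' z) (at z within closed_segment x y)"
      using d by (auto intro: has_derivative_at_withinI)
    show "x \<in> closed_segment x y" by simp
    fix z assume z: "z \<in> closed_segment x y"
    have "onorm (F' z - F' x) = onorm (\<lambda>h. F' z h - F' x h)"
      by (simp add: fun_diff_def)
    also have "\<dots> \<le> B * norm (z - x)" using B seg z by auto
    also have "\<dots> \<le> B * norm (y - x)"
      using segment_bound[OF z] B0 by (intro mult_left_mono) (auto simp: norm_minus_commute)
    finally show "onorm (F' z - F' x) \<le> B * norm (y - x)" .
  qed
  then show ?thesis by (simp add: power2_eq_square mult_ac)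
qed

lemma symdiff:
  fixes F :: "'a::real_normed_vector \<Rightarrow> 'b::real_normed_vector"
  assumes S: "convex S" and d: "\<And>z. (F has_derivative F' z) (at z)"
    and x: "x \<in> S" and y1: "x + k \<in> S" and y2: "x - k \<in> S"
    and B: "\<And>z. z \<in> S \<Longrightarrow> onorm (\<lambda>h. F' z h - F' x h) \<le> B * norm (z - x)" and B0: "0 \<le> B"
  shows "norm (F (x + k) + F (x - k) - 2 *\<^sub>R F x) \<le> 2 * B * norm k ^ 2"
proof -
  have lin: "linear (F' x)" using d[of x] has_derivative_linear by blast
  have e1: "norm (F (x + k) - F x - F' x k) \<le> B * norm k ^ 2"
    using T2gen[OF S d x y1 B B0] by simp
  have e2: "norm (F (x - k) - F x + F' x k) \<le> B * norm k ^ 2"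
    using T2gen[OF S d x y2 B B0] linear_neg[OF lin, of k] by simp
  have "F (x + k) + F (x - k) - 2 *\<^sub>R F x = (F (x + k) - F x - F' x k) + (F (x - k) - F x + F' x k)"
    by (simp add: algebra_simps scaleR_2)
  also have "norm \<dots> \<le> B * norm k ^ 2 + B * norm k ^ 2"
    by (rule order_trans[OF norm_triangle_ineq add_mono[OF e1 e2]])
  finally show ?thesis by simp
qed

lemma ft_deriv:
  fixes g1 :: "'a::real_normed_vector \<Rightarrow> 'a \<Rightarrow>\<^sub>L 'b::real_normed_vector"
  assumes d2: "\<And>x. (g1 has_derivative blinfun_apply (g2 x)) (at x)"
  shows "((\<lambda>x. blinfun_apply (g1 x) e) has_derivative (\<lambda>h. blinfun_apply (blinfun_apply (g2 x) h) e)) (at x)"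
  using blinfun.FDERIV[OF d2 has_derivative_const[of e]] by simp

lemma ft_onorm:
  fixes g2 :: "'a::{real_normed_vector,perfect_space} \<Rightarrow> 'a \<Rightarrow>\<^sub>L ('c::real_normed_vector \<Rightarrow>\<^sub>L 'b::real_normed_vector)"
  shows "onorm (\<lambda>h. blinfun_apply (blinfun_apply (g2 z) h) e - blinfun_apply (blinfun_apply (g2 x) h) e)
     \<le> norm (g2 z - g2 x) * norm e"
proof (rule onorm_le)
  fix h
  have "norm (blinfun_apply (blinfun_apply (g2 z) h) e - blinfun_apply (blinfun_apply (g2 x) h) e)
     = norm (blinfun_apply (blinfun_apply (g2 z - g2 x) h) e)"
    by (simp add: blinfun.diff_left)
  also have "\<dots> \<le> norm (blinfun_apply (g2 z - g2 x) h) * norm e" by (rule norm_blinfun)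
  also have "\<dots> \<le> norm (g2 z - g2 x) * norm h * norm e"
    by (intro mult_right_mono norm_blinfun) auto
  finally show "norm (blinfun_apply (blinfun_apply (g2 z) h) e - blinfun_apply (blinfun_apply (g2 x) h) e)
     \<le> norm (g2 z - g2 x) * norm e * norm h" by (simp add: mult_ac)
qed

lemma ft_onorm1:
  fixes g2 :: "'a::{real_normed_vector,perfect_space} \<Rightarrow> 'a \<Rightarrow>\<^sub>L ('c::real_normed_vector \<Rightarrow>\<^sub>L 'b::real_normed_vector)"
  shows "onorm (\<lambda>h. blinfun_apply (blinfun_apply (g2 z) h) e) \<le> norm (g2 z) * norm e"
proof (rule onorm_le)
  fix h
  have "norm (blinfun_apply (blinfun_apply (g2 z) h) e) \<le> norm (blinfun_apply (g2 z) h) * norm e" by (rule norm_blinfun)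
  also have "\<dots> \<le> norm (g2 z) * norm h * norm e"
    by (intro mult_right_mono norm_blinfun) auto
  finally show "norm (blinfun_apply (blinfun_apply (g2 z) h) e) \<le> norm (g2 z) * norm e * norm h" by (simp add: mult_ac)
qed

lemma alg6:
  fixes fZ fW L tZ tW aZ bZ aW bW r1 r2 r3 r4 q1 q2 q3 q4 s1 s2 s3 s4 c2 k e :: complex
  assumes "c2 = 4 * \<i> * k * e"
  shows "fZ - (1/4) * (r1 + r2 + r3 + r4) - e * (tZ + L - \<i> * k * (aZ + bZ)) =
    - (fW - fZ + e * L) - \<i> * k * e * ((aW + bW) - (aZ + bZ))
    - (1/4) * ((r1 - q1 + e * s1) + (r2 - q2 + e * s2) + (r3 - q3 + e * s3) + (r4 - q4 + e * s4))
    - (1/4) * ((q1 + q2 - 2 * fW - c2 * aW) + (q3 + q4 - 2 * fW - c2 * bW))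
    + e * (tW - tZ) + (e / 4) * ((s1 + s2 - 2 * tW) + (s3 + s4 - 2 * tW))"
  unfolding assms by (simp add: algebra_simps add_divide_distrib)
lemma norm6:
  fixes a b c d e f :: "'a::real_normed_vector"
  shows "norm (- a - b - c - d + e + f) \<le> norm a + norm b + norm c + norm d + norm e + norm f"
proof -
  have "norm (- a - b - c - d + e + f) \<le> norm (- a - b - c - d + e) + norm f" by (rule norm_triangle_ineq)
  also have "norm (- a - b - c - d + e) \<le> norm (- a - b - c - d) + norm e" by (rule norm_triangle_ineq)
  also have "norm (- a - b - c - d) \<le> norm (- a - b - c) + norm d" by (rule norm_triangle_ineq4)
  also have "norm (- a - b - c) \<le> norm (- a - b) + norm c" by (rule norm_triangle_ineq4)
  also have "norm (- a - b) \<le> norm (- a) + norm b" by (rule norm_triangle_ineq4)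
  finally show ?thesis by simp
qed

lemma norm4:
  fixes a b c d :: "'a::real_normed_vector"
  shows "norm (a + b + c + d) \<le> norm a + norm b + norm c + norm d"
proof -
  have "norm (a + b + c + d) \<le> norm (a + b + c) + norm d" by (rule norm_triangle_ineq)
  also have "norm (a + b + c) \<le> norm (a + b) + norm c" by (rule norm_triangle_ineq)
  also have "norm (a + b) \<le> norm a + norm b" by (rule norm_triangle_ineq)
  finally show ?thesis by simp
qed



lemma core:
  fixes f :: "(complex \<times> complex) \<times> real \<Rightarrow> complex"
    and g1 :: "(complex \<times> complex) \<times> real \<Rightarrow> ((complex \<times> complex) \<times> real) \<Rightarrow>\<^sub>L complex"
    and g2 :: "(complex \<times> complex) \<times> real \<Rightarrow> ((complex \<times> complex) \<times> real) \<Rightarrow>\<^sub>L (((complex \<times> complex) \<times> real) \<Rightarrow>\<^sub>L complex)"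
    and g3 :: "(complex \<times> complex) \<times> real \<Rightarrow> ((complex \<times> complex) \<times> real) \<Rightarrow>\<^sub>L (((complex \<times> complex) \<times> real) \<Rightarrow>\<^sub>L (((complex \<times> complex) \<times> real) \<Rightarrow>\<^sub>L complex))"
  assumes d1: "\<And>x. (f has_derivative blinfun_apply (g1 x)) (at x)"
    and d2: "\<And>x. (g1 has_derivative blinfun_apply (g2 x)) (at x)"
    and d3: "\<And>x. (g2 has_derivative blinfun_apply (g3 x)) (at x)"
    and holo: "\<forall>t. holo2 (\<lambda>Z. f (Z, t))"
    and S: "convex S"
    and B2: "\<And>x. x \<in> S \<Longrightarrow> norm (g2 x) \<le> B2"
    and B3: "\<And>x. x \<in> S \<Longrightarrow> norm (g3 x) \<le> B3"
    and M: "\<And>x. x \<in> S \<Longrightarrow> cmod (f x) \<le> M"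
    and eps: "0 \<le> \<epsilon>"
    and hc: "c^2 = 4 * \<i> * complex_of_real \<kappa> * complex_of_real \<epsilon>"
    and W: "W = Z - \<epsilon> *\<^sub>R v"
    and memZ: "(Z, t) \<in> S" and memW: "(W, t) \<in> S"
    and mem1: "\<And>w. cmod (w - fst W) \<le> cmod c + 1 \<Longrightarrow> ((w, snd W), t) \<in> S \<and> ((w, snd W), t - \<epsilon>) \<in> S"
    and mem2: "\<And>w. cmod (w - snd W) \<le> cmod c + 1 \<Longrightarrow> ((fst W, w), t) \<in> S \<and> ((fst W, w), t - \<epsilon>) \<in> S"
  shows "cmod (f (Z, t) - (1/4) * (f ((fst W + c, snd W), t - \<epsilon>) + f ((fst W - c, snd W), t - \<epsilon>)
              + f ((fst W, snd W + c), t - \<epsilon>) + f ((fst W, snd W - c), t - \<epsilon>))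
        - complex_of_real \<epsilon> * (dt f Z t + (fst v * d1 f Z t + snd v * d2 f Z t)
              - \<i> * complex_of_real \<kappa> * (d11 f Z t + d22 f Z t)))
     \<le> \<epsilon>^2 * (B2 * norm v ^ 2 + 2 * \<bar>\<kappa>\<bar> * B3 * norm v + 64 * (M + 1) * \<kappa>^2 + B2 * norm v + 4 * \<bar>\<kappa>\<bar> * B3 + B2)"
proof -
  obtain w1 w2 where Wp: "W = (w1, w2)" by fastforce
  define e :: "(complex \<times> complex) \<times> real" where "e = ((0, 0), 1)"
  define ft where "ft x = blinfun_apply (g1 x) e" for x
  have ne: "norm e = 1" by (simp add: e_def norm_Pair)
  have B20: "0 \<le> B2" using B2[OF memZ] norm_ge_zero order_trans by blast
  have B30: "0 \<le> B3" using B3[OF memZ] norm_ge_zero order_trans by blast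
  have ftd: "(ft has_derivative (\<lambda>h. blinfun_apply (blinfun_apply (g2 x) h) e)) (at x)" for x
    unfolding ft_def by (rule ft_deriv[OF d2])
  have E1: "cmod (f (Y, t - \<epsilon>) - f (Y, t) + complex_of_real \<epsilon> * ft (Y, t)) \<le> B2 * \<epsilon>^2"
    if Y1: "(Y, t) \<in> S" and Y2: "(Y, t - \<epsilon>) \<in> S" for Y
  proof -
    have df: "(Y, t - \<epsilon>) - (Y, t) = (-\<epsilon>) *\<^sub>R e" by (simp add: e_def zero_prod_def)
    have "cmod (f (Y, t - \<epsilon>) - f (Y, t) - blinfun_apply (g1 (Y, t)) ((Y, t - \<epsilon>) - (Y, t)))
      \<le> B2 * norm ((Y, t - \<epsilon>) - (Y, t)) ^ 2"
      by (rule T2[OF S d1 d2 B2 Y1 Y2])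
    then have "cmod (f (Y, t - \<epsilon>) - f (Y, t) - blinfun_apply (g1 (Y, t)) ((-\<epsilon>) *\<^sub>R e)) \<le> B2 * \<epsilon>^2"
      unfolding df
    proof -
      assume a: "cmod (f (Y, t - \<epsilon>) - f (Y, t) - blinfun_apply (g1 (Y, t)) ((- \<epsilon>) *\<^sub>R e)) \<le> B2 * (norm ((- \<epsilon>) *\<^sub>R e))\<^sup>2"
      have nn: "norm ((-\<epsilon>) *\<^sub>R e) = \<epsilon>" using eps ne by (simp only: norm_scaleR abs_minus_cancel)
      show ?thesis using a unfolding nn .
    qed
    moreover have "blinfun_apply (g1 (Y, t)) ((-\<epsilon>) *\<^sub>R e) = - (complex_of_real \<epsilon> * ft (Y, t))"
      by (simp only: blinfun.scaleR_right ft_def scaleR_conv_of_real of_real_minus mult_minus_left)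
    ultimately show ?thesis by (metis diff_minus_eq_add)
  qed
  have H1: "cmod (f ((w1 + c, w2), t) + f ((w1 - c, w2), t) - 2 * f (W, t) - c^2 * d11 f W t) \<le> 8 * (M + 1) * cmod c ^ 4"
  proof -
    have "cmod ((\<lambda>w. f ((w, w2), t)) (w1 + c) + (\<lambda>w. f ((w, w2), t)) (w1 - c) - 2 * (\<lambda>w. f ((w, w2), t)) w1
        - c^2 * deriv (deriv (\<lambda>w. f ((w, w2), t))) w1) \<le> 8 * (M + 1) * cmod c ^ 4"
    proof (rule holo_sym2)
      show "(\<lambda>w. f ((w, w2), t)) holomorphic_on UNIV" by (rule holo_psi1[OF d1 holo])
      show "\<And>w. cmod (w - w1) \<le> cmod c + 1 \<Longrightarrow> cmod (f ((w, w2), t)) \<le> M"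
        using mem1 M Wp by auto
    qed simp
    then show ?thesis by (simp add: Wp d11_def)
  qed
  have H2: "cmod (f ((w1, w2 + c), t) + f ((w1, w2 - c), t) - 2 * f (W, t) - c^2 * d22 f W t) \<le> 8 * (M + 1) * cmod c ^ 4"
  proof -
    have "cmod ((\<lambda>w. f ((w1, w), t)) (w2 + c) + (\<lambda>w. f ((w1, w), t)) (w2 - c) - 2 * (\<lambda>w. f ((w1, w), t)) w2
        - c^2 * deriv (deriv (\<lambda>w. f ((w1, w), t))) w2) \<le> 8 * (M + 1) * cmod c ^ 4"
    proof (rule holo_sym2)
      show "(\<lambda>w. f ((w1, w), t)) holomorphic_on UNIV" by (rule holo_psi1[OF d1 holo])
      show "\<And>w. cmod (w - w2) \<le> cmod c + 1 \<Longrightarrow> cmod (f ((w1, w), t)) \<le> M"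
        using mem2 M Wp by auto
    qed simp
    then show ?thesis by (simp add: Wp d22_def)
  qed
  have nWZ: "norm ((W, t) - (Z, t)) = \<epsilon> * norm v"
  proof -
    have "(W, t) - (Z, t) = (- (\<epsilon> *\<^sub>R v), 0::real)" by (simp add: W)
    then have "norm ((W, t) - (Z, t)) = norm (\<epsilon> *\<^sub>R v)" by (simp add: norm_Pair)
    then show ?thesis using eps by simp
  qed
  have F4: "cmod (f (W, t) - f (Z, t) + complex_of_real \<epsilon> * (fst v * d1 f Z t + snd v * d2 f Z t)) \<le> B2 * (\<epsilon> * norm v) ^ 2"
  proof -
    have "cmod (f (W, t) - f (Z, t) - blinfun_apply (g1 (Z, t)) ((W, t) - (Z, t))) \<le> B2 * norm ((W, t) - (Z, t)) ^ 2"
      by (rule T2[OF S d1 d2 B2 memZ memW])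
    moreover have "blinfun_apply (g1 (Z, t)) ((W, t) - (Z, t)) = - (complex_of_real \<epsilon> * (fst v * d1 f Z t + snd v * d2 f Z t))"
    proof -
      have "(W, t) - (Z, t) = ((- (complex_of_real \<epsilon> * fst v), - (complex_of_real \<epsilon> * snd v)), 0)"
        by (simp add: W prod_eq_iff scaleR_conv_of_real)
      then show ?thesis using link1[OF d1 holo] by (simp add: algebra_simps)
    qed
    ultimately show ?thesis using nWZ by simp
  qed
  have g2lip: "norm (g2 (W, t) - g2 (Z, t)) \<le> B3 * (\<epsilon> * norm v)"
    using lip_blin[OF S d3 B3 memZ memW] nWZ by simp
  have app2: "cmod (blinfun_apply (blinfun_apply A k) k) \<le> norm A" if "norm k = 1" for A k
  proof -
    have "cmod (blinfun_apply (blinfun_apply A k) k) \<le> norm (blinfun_apply A k) * norm k" by (rule norm_blinfun)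
    also have "\<dots> \<le> norm A * norm k * norm k" by (intro mult_right_mono norm_blinfun) auto
    finally show ?thesis using that by simp
  qed
  have D: "cmod ((d11 f W t + d22 f W t) - (d11 f Z t + d22 f Z t)) \<le> 2 * (B3 * (\<epsilon> * norm v))"
  proof -
    let ?A = "g2 (W, t) - g2 (Z, t)"
    have "(d11 f W t + d22 f W t) - (d11 f Z t + d22 f Z t) =
       blinfun_apply (blinfun_apply ?A ((1,0),0)) ((1,0),0) + blinfun_apply (blinfun_apply ?A ((0,1),0)) ((0,1),0)"
      by (simp add: link11[OF d1 d2 holo] link22[OF d1 d2 holo] blinfun.diff_left)
    also have "cmod \<dots> \<le> norm ?A + norm ?A"
      by (rule order_trans[OF norm_triangle_ineq add_mono]) (auto intro!: app2)
    finally show ?thesis using g2lip by simp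
  qed
  have ftonorm: "onorm (\<lambda>h. blinfun_apply (blinfun_apply (g2 z) h) e - blinfun_apply (blinfun_apply (g2 x) h) e) \<le> B3 * norm (z - x)"
    if "z \<in> S" "x \<in> S" for z x
    using ft_onorm[of g2 z e x] lip_blin[OF S d3 B3 that(2) that(1)] ne by simp
  have P: "cmod (ft (x + k) + ft (x - k) - 2 * ft x) \<le> 2 * B3 * norm k ^ 2"
    if "x \<in> S" "x + k \<in> S" "x - k \<in> S" for x k
    using symdiff[OF S ftd that, of B3] ftonorm that(1) B30 by (simp add: scaleR_conv_of_real)
  have P1: "cmod (ft ((w1 + c, w2), t) + ft ((w1 - c, w2), t) - 2 * ft (W, t)) \<le> 2 * B3 * cmod c ^ 2"
  proof -
    have "cmod (ft ((W, t) + ((c, 0), 0)) + ft ((W, t) - ((c, 0), 0)) - 2 * ft (W, t)) \<le> 2 * B3 * norm (((c, 0), 0) :: (complex \<times> complex) \<times> real) ^ 2"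
      by (rule P) (use memW mem1 Wp in auto)
    then show ?thesis by (simp add: Wp)
  qed
  have P2: "cmod (ft ((w1, w2 + c), t) + ft ((w1, w2 - c), t) - 2 * ft (W, t)) \<le> 2 * B3 * cmod c ^ 2"
  proof -
    have "cmod (ft ((W, t) + ((0, c), 0)) + ft ((W, t) - ((0, c), 0)) - 2 * ft (W, t)) \<le> 2 * B3 * norm (((0, c), 0) :: (complex \<times> complex) \<times> real) ^ 2"
      by (rule P) (use memW mem2 Wp in auto)
    then show ?thesis by (simp add: Wp)
  qed
  have FT: "cmod (ft (W, t) - ft (Z, t)) \<le> B2 * (\<epsilon> * norm v)"
  proof -
    have "cmod (ft (W, t) - ft (Z, t)) \<le> B2 * norm ((W, t) - (Z, t))"
    proof (rule differentiable_bound[OF S _ _ memW memZ])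
      show "\<And>x. x \<in> S \<Longrightarrow> (ft has_derivative (\<lambda>h. blinfun_apply (blinfun_apply (g2 x) h) e)) (at x within S)"
        using ftd by (auto intro: has_derivative_at_withinI)
      fix x assume "x \<in> S"
      show "onorm (\<lambda>h. blinfun_apply (blinfun_apply (g2 x) h) e) \<le> B2"
        by (rule order_trans[OF ft_onorm1]) (simp add: ne B2 \<open>x \<in> S\<close>)
    qed
    then show ?thesis using nWZ by simp
  qed
  have dtZ: "dt f Z t = ft (Z, t)" unfolding ft_def e_def by (rule link_t[OF d1])
  have c2: "cmod c ^ 2 = 4 * \<bar>\<kappa>\<bar> * \<epsilon>"
  proof -
    have "cmod c ^ 2 = cmod (c ^ 2)" by (simp add: norm_power)
    also have "\<dots> = 4 * \<bar>\<kappa>\<bar> * \<epsilon>" using eps by (simp add: hc norm_mult)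
    finally show ?thesis .
  qed
  have c4: "cmod c ^ 4 = 16 * \<kappa>^2 * \<epsilon>^2"
  proof -
    have "cmod c ^ 4 = (cmod c ^ 2)^2" by simp
    then show ?thesis by (simp add: c2 power_mult_distrib)
  qed
  have mc: "cmod (w1 + c - fst W) \<le> cmod c + 1" "cmod (w1 - c - fst W) \<le> cmod c + 1"
    "cmod (w2 + c - snd W) \<le> cmod c + 1" "cmod (w2 - c - snd W) \<le> cmod c + 1" by (auto simp: Wp)
  have Ea: "cmod (f ((w1 + c, w2), t - \<epsilon>) - f ((w1 + c, w2), t) + complex_of_real \<epsilon> * ft ((w1 + c, w2), t)) \<le> B2 * \<epsilon>^2"
    using E1 mem1[OF mc(1)] Wp by auto
  have Eb: "cmod (f ((w1 - c, w2), t - \<epsilon>) - f ((w1 - c, w2), t) + complex_of_real \<epsilon> * ft ((w1 - c, w2), t)) \<le> B2 * \<epsilon>^2"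
    using E1 mem1[OF mc(2)] Wp by auto
  have Ec: "cmod (f ((w1, w2 + c), t - \<epsilon>) - f ((w1, w2 + c), t) + complex_of_real \<epsilon> * ft ((w1, w2 + c), t)) \<le> B2 * \<epsilon>^2"
    using E1 mem2[OF mc(3)] Wp by auto
  have Ed: "cmod (f ((w1, w2 - c), t - \<epsilon>) - f ((w1, w2 - c), t) + complex_of_real \<epsilon> * ft ((w1, w2 - c), t)) \<le> B2 * \<epsilon>^2"
    using E1 mem2[OF mc(4)] Wp by auto
  have fstW: "fst W = w1" and sndW: "snd W = w2" using Wp by simp_all
  have hc': "c^2 = 4 * \<i> * complex_of_real \<kappa> * complex_of_real \<epsilon>" by (rule hc)
  note id = alg6[OF hc', of "f (Z, t)" "f ((w1 + c, w2), t - \<epsilon>)" "f ((w1 - c, w2), t - \<epsilon>)"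
     "f ((w1, w2 + c), t - \<epsilon>)" "f ((w1, w2 - c), t - \<epsilon>)" "ft (Z, t)" "fst v * d1 f Z t + snd v * d2 f Z t"
     "d11 f Z t" "d22 f Z t" "f (W, t)" "d11 f W t" "d22 f W t"
     "f ((w1 + c, w2), t)" "ft ((w1 + c, w2), t)" "f ((w1 - c, w2), t)" "ft ((w1 - c, w2), t)"
     "f ((w1, w2 + c), t)" "ft ((w1, w2 + c), t)" "f ((w1, w2 - c), t)" "ft ((w1, w2 - c), t)" "ft (W, t)"]
  have T1: "cmod (f (W, t) - f (Z, t) + complex_of_real \<epsilon> * (fst v * d1 f Z t + snd v * d2 f Z t)) \<le> \<epsilon>^2 * (B2 * norm v ^ 2)"
    using F4 by (simp add: power_mult_distrib mult_ac)
  have T2: "cmod (\<i> * complex_of_real \<kappa> * complex_of_real \<epsilon> * ((d11 f W t + d22 f W t) - (d11 f Z t + d22 f Z t)))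
      \<le> \<epsilon>^2 * (2 * \<bar>\<kappa>\<bar> * B3 * norm v)"
  proof -
    have "cmod (\<i> * complex_of_real \<kappa> * complex_of_real \<epsilon> * ((d11 f W t + d22 f W t) - (d11 f Z t + d22 f Z t)))
       = \<bar>\<kappa>\<bar> * \<epsilon> * cmod ((d11 f W t + d22 f W t) - (d11 f Z t + d22 f Z t))"
      using eps by (simp add: norm_mult)
    also have "\<dots> \<le> \<bar>\<kappa>\<bar> * \<epsilon> * (2 * (B3 * (\<epsilon> * norm v)))"
      using D eps by (intro mult_left_mono) auto
    finally show ?thesis by (simp add: power2_eq_square mult_ac)
  qed
  have T3: "cmod ((1/4) * ((f ((w1 + c, w2), t - \<epsilon>) - f ((w1 + c, w2), t) + complex_of_real \<epsilon> * ft ((w1 + c, w2), t))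
       + (f ((w1 - c, w2), t - \<epsilon>) - f ((w1 - c, w2), t) + complex_of_real \<epsilon> * ft ((w1 - c, w2), t))
       + (f ((w1, w2 + c), t - \<epsilon>) - f ((w1, w2 + c), t) + complex_of_real \<epsilon> * ft ((w1, w2 + c), t))
       + (f ((w1, w2 - c), t - \<epsilon>) - f ((w1, w2 - c), t) + complex_of_real \<epsilon> * ft ((w1, w2 - c), t))))
     \<le> \<epsilon>^2 * B2" (is "cmod ((1/4) * ?X) \<le> _")
  proof -
    have "cmod ?X \<le> 4 * (B2 * \<epsilon>^2)"
      using order_trans[OF norm4 add_mono[OF add_mono[OF add_mono[OF Ea Eb] Ec] Ed]] by linarith
    then have "cmod ?X / 4 \<le> B2 * \<epsilon>^2" by linarith
    then show ?thesis by (simp add: norm_mult mult.commute)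
  qed
  have T4: "cmod ((1/4) * ((f ((w1 + c, w2), t) + f ((w1 - c, w2), t) - 2 * f (W, t) - c^2 * d11 f W t)
       + (f ((w1, w2 + c), t) + f ((w1, w2 - c), t) - 2 * f (W, t) - c^2 * d22 f W t)))
     \<le> \<epsilon>^2 * (64 * (M + 1) * \<kappa>^2)" (is "cmod ((1/4) * ?X) \<le> _")
  proof -
    have "cmod ?X \<le> 8 * (M + 1) * cmod c ^ 4 + 8 * (M + 1) * cmod c ^ 4"
      by (rule order_trans[OF norm_triangle_ineq add_mono[OF H1 H2]])
    moreover have e: "8 * (M + 1) * cmod c ^ 4 = 128 * ((M+1) * \<kappa>^2 * \<epsilon>^2)" by (simp add: c4 mult_ac)
    moreover have t: "\<epsilon>^2 * (64 * (M + 1) * \<kappa>^2) = 64 * ((M+1) * \<kappa>^2 * \<epsilon>^2)" by (simp add: mult_ac)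
    moreover have n: "cmod ((1/4) * ?X) = cmod ?X / 4" by (simp add: norm_mult)
    ultimately show ?thesis by linarith
  qed
  have T5: "cmod (complex_of_real \<epsilon> * (ft (W, t) - ft (Z, t))) \<le> \<epsilon>^2 * (B2 * norm v)"
  proof -
    have "cmod (complex_of_real \<epsilon> * (ft (W, t) - ft (Z, t))) = \<epsilon> * cmod (ft (W, t) - ft (Z, t))"
      using eps by (simp add: norm_mult)
    also have "\<dots> \<le> \<epsilon> * (B2 * (\<epsilon> * norm v))" using FT eps by (intro mult_left_mono) auto
    finally show ?thesis by (simp add: power2_eq_square mult_ac)
  qed
  have T6: "cmod (complex_of_real \<epsilon> / 4 * ((ft ((w1 + c, w2), t) + ft ((w1 - c, w2), t) - 2 * ft (W, t))
       + (ft ((w1, w2 + c), t) + ft ((w1, w2 - c), t) - 2 * ft (W, t))))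
     \<le> \<epsilon>^2 * (4 * \<bar>\<kappa>\<bar> * B3)" (is "cmod (_ * ?X) \<le> _")
  proof -
    have "cmod ?X \<le> 2 * B3 * cmod c ^ 2 + 2 * B3 * cmod c ^ 2"
      by (rule order_trans[OF norm_triangle_ineq add_mono[OF P1 P2]])
    moreover have "2 * B3 * cmod c ^ 2 + 2 * B3 * cmod c ^ 2 = 16 * B3 * \<bar>\<kappa>\<bar> * \<epsilon>" by (simp add: c2 algebra_simps)
    ultimately have X: "cmod ?X \<le> 16 * B3 * \<bar>\<kappa>\<bar> * \<epsilon>" by linarith
    have "cmod (complex_of_real \<epsilon> / 4 * ?X) = \<epsilon> / 4 * cmod ?X" using eps by (simp add: norm_mult norm_divide)
    also have "\<dots> \<le> \<epsilon> / 4 * (16 * B3 * \<bar>\<kappa>\<bar> * \<epsilon>)" using X eps by (intro mult_left_mono) auto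
    finally show ?thesis by (simp add: power2_eq_square mult_ac)
  qed
  have "cmod (f (Z, t) - (1/4) * (f ((fst W + c, snd W), t - \<epsilon>) + f ((fst W - c, snd W), t - \<epsilon>)
              + f ((fst W, snd W + c), t - \<epsilon>) + f ((fst W, snd W - c), t - \<epsilon>))
        - complex_of_real \<epsilon> * (dt f Z t + (fst v * d1 f Z t + snd v * d2 f Z t)
              - \<i> * complex_of_real \<kappa> * (d11 f Z t + d22 f Z t)))
    \<le> \<epsilon>^2 * (B2 * norm v ^ 2) + \<epsilon>^2 * (2 * \<bar>\<kappa>\<bar> * B3 * norm v) + \<epsilon>^2 * B2
       + \<epsilon>^2 * (64 * (M + 1) * \<kappa>^2) + \<epsilon>^2 * (B2 * norm v) + \<epsilon>^2 * (4 * \<bar>\<kappa>\<bar> * B3)"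
    unfolding dtZ fstW sndW id
    by (rule order_trans[OF norm6]) (intro add_mono T1 T2 T3 T4 T5 T6)
  moreover have "\<epsilon>^2 * (B2 * norm v ^ 2 + 2 * \<bar>\<kappa>\<bar> * B3 * norm v + 64 * (M + 1) * \<kappa>^2 + B2 * norm v + 4 * \<bar>\<kappa>\<bar> * B3 + B2)
    = \<epsilon>^2 * (B2 * norm v ^ 2) + \<epsilon>^2 * (2 * \<bar>\<kappa>\<bar> * B3 * norm v) + \<epsilon>^2 * (64 * (M + 1) * \<kappa>^2)
      + \<epsilon>^2 * (B2 * norm v) + \<epsilon>^2 * (4 * \<bar>\<kappa>\<bar> * B3) + \<epsilon>^2 * B2"
    by (simp only: distrib_left)
  ultimately show ?thesis by linarith
qed

lemma cscale_add: "cscale c (x + y) = cscale c x + cscale c y"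
  by (simp add: cscale_def algebra_simps)
lemma cscale_diff: "cscale c (x - y) = cscale c x - cscale c y"
  by (simp add: cscale_def algebra_simps)

lemma Zeps_Ztil:
  "Zeps hbar m V Z0 s eps j n = Ztil V Z0 eps n + cscale (gam hbar m eps) ((s ^^ n) (u j) - u j)"
proof (induction n)
  case 0 then show ?case by (simp add: cscale_def zero_prod_def)
next
  case (Suc n)
  show ?case using Suc by (simp add: cscale_diff algebra_simps)
qed

lemma splus_vals: "splus (1,1) = (1,-1)" "splus (1,-1) = (-1,-1)" "splus (-1,-1) = (-1,1)" "splus (-1,1) = (1,1)"
  by (simp_all add: splus_def u_def)

lemma inj_splus: "inj splus"
proof (rule injI)
  fix x y assume a: "splus x = splus y"
  let ?U = "{(1::real,1::real), (1,-1), (-1,-1), (-1,1)}"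
  have out: "z \<notin> ?U \<Longrightarrow> splus z = z" for z by (auto simp: splus_def u_def)
  have inU: "z \<in> ?U \<Longrightarrow> splus z \<in> ?U" for z by (auto simp: splus_vals)
  show "x = y"
  proof (cases "x \<in> ?U")
    case True
    then show ?thesis
    proof (cases "y \<in> ?U")
      case True
      with \<open>x \<in> ?U\<close> a show ?thesis by (auto simp: splus_vals)
    next
      case False
      then show ?thesis using a out[of y] inU[OF \<open>x \<in> ?U\<close>] by simp
    qed
  next
    case False
    then show ?thesis
      using a out[of x] out[of y] inU[of y] by (cases "y \<in> ?U") auto
  qed
qed

lemma sminus_vals: "sminus (1,-1) = (1,1)" "sminus (-1,-1) = (1,-1)" "sminus (-1,1) = (-1,-1)" "sminus (1,1) = (-1,1)"
  unfolding sminus_def by (simp_all add: inv_f_eq[OF inj_splus] splus_vals)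

lemma u_cases: "j \<in> {1..4} \<Longrightarrow> j = 1 \<or> j = 2 \<or> j = 3 \<or> j = (4::nat)" by auto

lemma s4: assumes "s \<in> {splus, sminus}" "j \<in> {1..4}" shows "(s ^^ 4) (u j) = u j"
  using assms u_cases[OF assms(2)]
  by (auto simp: u_def eval_nat_numeral splus_vals sminus_vals)

lemma s4k: assumes "s \<in> {splus, sminus}" "j \<in> {1..4}" shows "(s ^^ (4 * k)) (u j) = u j"
proof (induction k)
  case 0 then show ?case by simp
next
  case (Suc k)
  have e: "4 * Suc k = 4 + 4 * k" by simp
  have "(s ^^ (4 * Suc k)) (u j) = (s ^^ 4) ((s ^^ (4 * k)) (u j))"
    by (simp only: e funpow_add o_apply)
  then show ?case using Suc s4[OF assms] by simp
qed

lemma s4m1: assumes "s \<in> {splus, sminus}" "j \<in> {1..4}" "q \<ge> 1"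
  shows "(s ^^ (4 * q - 1)) (u j) = (s ^^ 3) (u j)"
proof -
  have "4 * q - 1 = 3 + 4 * (q - 1)" using assms(3) by simp
  then have "(s ^^ (4 * q - 1)) (u j) = (s ^^ 3) ((s ^^ (4 * (q - 1))) (u j))"
    by (simp add: funpow_add del: funpow.simps)
  then show ?thesis using s4k[OF assms(1,2)] by simp
qed

lemma sum4: "(\<Sum>j\<in>{1..4::nat}. g j) = g 1 + g 2 + g 3 + g 4"
  by (simp add: eval_nat_numeral atLeastAtMostSuc_conv add.commute add.left_commute)

lemma add_Pair_rule: "W + (a, b) = (fst W + a, snd W + b)" by (simp add: prod_eq_iff)

lemma pts:
  assumes s: "s \<in> {splus, sminus}"
  shows "(\<Sum>j\<in>{1..4::nat}. F (W + cscale g ((s ^^ 3) (u j) - u j))) =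
     F ((fst W + 2 * g, snd W)) + F ((fst W - 2 * g, snd W)) + F ((fst W, snd W + 2 * g)) + F ((fst W, snd W - 2 * g))"
  using s unfolding sum4
  by (auto simp: u_def eval_nat_numeral splus_vals sminus_vals cscale_def add_Pair_rule algebra_simps)

lemma vlip:
  fixes V V' :: "real \<Rightarrow> 'b::real_normed_vector"
  assumes d: "\<And>\<tau>. \<tau> \<in> {a..b} \<Longrightarrow> (V has_vector_derivative V' \<tau>) (at \<tau> within {a..b})"
    and B: "\<And>\<tau>. \<tau> \<in> {a..b} \<Longrightarrow> norm (V' \<tau>) \<le> L" and x: "x \<in> {a..b}" and y: "y \<in> {a..b}"
  shows "norm (V y - V x) \<le> L * \<bar>y - x\<bar>"
proof -
  have "norm (V y - V x) \<le> L * norm (y - x)"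
  proof (rule differentiable_bound[where f'="\<lambda>\<tau> h. h *\<^sub>R V' \<tau>"])
    show "convex {a..b}" by simp
    show "\<And>\<tau>. \<tau> \<in> {a..b} \<Longrightarrow> (V has_derivative (\<lambda>h. h *\<^sub>R V' \<tau>)) (at \<tau> within {a..b})"
      using d by (simp add: has_vector_derivative_def)
    show "\<And>\<tau>. \<tau> \<in> {a..b} \<Longrightarrow> onorm (\<lambda>h. h *\<^sub>R V' \<tau>) \<le> L"
      using B by (simp add: onorm_scaleR_left[OF bounded_linear_ident] onorm_id)
  qed (use x y in auto)
  then show ?thesis by simp
qed

lemma Ztil_Zc:
  fixes V Zc :: "real \<Rightarrow> complex \<times> complex"
  assumes eps: "0 < eps" and LV0: "0 \<le> LV"
    and Vlip: "\<And>a b. a \<in> {0..T} \<Longrightarrow> b \<in> {0..T} \<Longrightarrow> norm (V b - V a) \<le> LV * \<bar>b - a\<bar>"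
    and Zc: "\<forall>\<tau>\<ge>0. (Zc has_vector_derivative V \<tau>) (at \<tau> within {0..})" and Z0: "Zc 0 = Z0"
  shows "real n * eps \<le> T \<Longrightarrow> norm (Ztil V Z0 eps n - Zc (real n * eps)) \<le> 4 * LV * eps * (real n * eps)"
proof (induction n)
  case 0 then show ?case using Z0 by simp
next
  case (Suc n)
  define c where "c = real (4 * (Suc n div 4)) * eps"
  define a where "a = real n * eps"
  define b where "b = real (Suc n) * eps"
  have ab: "a \<le> b" "b = a + eps" using eps by (simp_all add: a_def b_def algebra_simps)
  have bT: "b \<le> T" using Suc.prems by (simp add: b_def)
  have a0: "0 \<le> a" using eps by (simp add: a_def)
  have k1: "4 * (Suc n div 4) \<le> Suc n" by simp
  have k2: "Suc n \<le> 4 * (Suc n div 4) + 3" by linarith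
  have c0: "0 \<le> c" using eps by (simp add: c_def)
  have cb: "c \<le> b" unfolding c_def b_def using k1 eps by (intro mult_right_mono) (simp_all add: of_nat_le_iff[symmetric] del: of_nat_le_iff)
  have cb2: "b \<le> c + 3 * eps"
  proof -
    have "real (Suc n) \<le> real (4 * (Suc n div 4)) + 3" using k2 by linarith
    then have "real (Suc n) * eps \<le> (real (4 * (Suc n div 4)) + 3) * eps" using eps by (intro mult_right_mono) auto
    then show ?thesis by (simp add: c_def b_def algebra_simps)
  qed
  define G where "G s = Zc s - s *\<^sub>R V c" for s
  have Gd: "(G has_vector_derivative (V s - V c)) (at s within {a..b})" if "s \<in> {a..b}" for s
  proof -
    have "(Zc has_vector_derivative V s) (at s within {a..b})"
    proof (rule has_vector_derivative_within_subset)
      have s0: "s \<ge> 0" using that a0 by auto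
      then show "(Zc has_vector_derivative V s) (at s within {0..})" using Zc by blast
      show "{a..b} \<subseteq> {0..}" using a0 by auto
    qed
    moreover have "((\<lambda>s. s *\<^sub>R V c) has_vector_derivative V c) (at s within {a..b})"
      unfolding has_vector_derivative_def by (rule bounded_linear_imp_has_derivative[OF bounded_linear_scaleR_left])
    ultimately show ?thesis unfolding G_def by (rule has_vector_derivative_diff)
  qed
  have GB: "norm (V s - V c) \<le> 4 * LV * eps" if "s \<in> {a..b}" for s
  proof -
    have s1: "a \<le> s" "s \<le> b" using that by auto
    have sc: "c \<in> {0..T}" "s \<in> {0..T}" using s1 c0 cb bT a0 by auto
    have "norm (V s - V c) \<le> LV * \<bar>s - c\<bar>" by (rule Vlip[OF sc])
    also have "\<dots> \<le> LV * (4 * eps)"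
    proof (rule mult_left_mono[OF _ LV0])
      have "s - c \<le> 4 * eps" "c - s \<le> 4 * eps" using s1 ab cb cb2 eps by linarith+
      then show "\<bar>s - c\<bar> \<le> 4 * eps" by (simp only: abs_le_iff) simp
    qed
    finally show ?thesis by simp
  qed
  have Gb: "norm (G b - G a) \<le> 4 * LV * eps * \<bar>b - a\<bar>"
    by (rule vlip[OF Gd GB]) (use ab in auto)
  have "Ztil V Z0 eps (Suc n) - Zc (real (Suc n) * eps) = (Ztil V Z0 eps n - Zc a) - (G b - G a)"
    by (simp add: G_def c_def a_def b_def algebra_simps ab(2)[unfolded a_def b_def])
  also have "norm \<dots> \<le> 4 * LV * eps * a + 4 * LV * eps * eps"
  proof (rule order_trans[OF norm_triangle_ineq4 add_mono])
    show "norm (Ztil V Z0 eps n - Zc a) \<le> 4 * LV * eps * a"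
    proof -
      have "real n * eps \<le> T" using ab bT by (simp add: a_def)
      then show ?thesis using Suc.IH by (simp add: a_def)
    qed
    show "norm (G b - G a) \<le> 4 * LV * eps * eps" using Gb ab eps by simp
  qed
  also have "\<dots> = 4 * LV * eps * (real (Suc n) * eps)" by (simp add: a_def algebra_simps)
  finally show ?case .
qed

lemma dyn_lip:
  fixes f :: "(complex \<times> complex) \<times> real \<Rightarrow> complex"
    and g1 :: "(complex \<times> complex) \<times> real \<Rightarrow> ((complex \<times> complex) \<times> real) \<Rightarrow>\<^sub>L complex"
    and g2 :: "(complex \<times> complex) \<times> real \<Rightarrow> ((complex \<times> complex) \<times> real) \<Rightarrow>\<^sub>L (((complex \<times> complex) \<times> real) \<Rightarrow>\<^sub>L complex)"
    and g3 :: "(complex \<times> complex) \<times> real \<Rightarrow> ((complex \<times> complex) \<times> real) \<Rightarrow>\<^sub>L (((complex \<times> complex) \<times> real) \<Rightarrow>\<^sub>L (((complex \<times> complex) \<times> real) \<Rightarrow>\<^sub>L complex))"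
  assumes d1: "\<And>x. (f has_derivative blinfun_apply (g1 x)) (at x)"
    and d2: "\<And>x. (g1 has_derivative blinfun_apply (g2 x)) (at x)"
    and d3: "\<And>x. (g2 has_derivative blinfun_apply (g3 x)) (at x)"
    and holo: "\<forall>t. holo2 (\<lambda>Z. f (Z, t))"
    and S: "convex S"
    and B2: "\<And>x. x \<in> S \<Longrightarrow> norm (g2 x) \<le> B2"
    and B3: "\<And>x. x \<in> S \<Longrightarrow> norm (g3 x) \<le> B3"
    and m1: "(Z1, t) \<in> S" and m2: "(Z2, t) \<in> S" and vM: "norm v \<le> MV"
  shows "cmod ((dt f Z1 t + (fst v * d1 f Z1 t + snd v * d2 f Z1 t) - \<i> * complex_of_real \<kappa> * (d11 f Z1 t + d22 f Z1 t))
    - (dt f Z2 t + (fst v * d1 f Z2 t + snd v * d2 f Z2 t) - \<i> * complex_of_real \<kappa> * (d11 f Z2 t + d22 f Z2 t)))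
    \<le> (B2 * (1 + 2 * MV) + 2 * \<bar>\<kappa>\<bar> * B3) * norm (Z1 - Z2)"
proof -
  define A where "A = g1 (Z1, t) - g1 (Z2, t)"
  define Bm where "Bm = g2 (Z1, t) - g2 (Z2, t)"
  have nx: "norm ((Z1, t) - (Z2, t)) = norm (Z1 - Z2)" by (simp add: norm_Pair)
  have nA: "norm A \<le> B2 * norm (Z1 - Z2)"
    using lip_blin[OF S d2 B2 m2 m1] nx by (simp add: A_def)
  have nB: "norm Bm \<le> B3 * norm (Z1 - Z2)"
    using lip_blin[OF S d3 B3 m2 m1] nx by (simp add: Bm_def)
  have ap1: "cmod (blinfun_apply A k) \<le> norm A" if "norm k = 1" for k
    using norm_blinfun[of A k] that by simp
  have ap2: "cmod (blinfun_apply (blinfun_apply Bm k) k) \<le> norm Bm" if "norm k = 1" for k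
  proof -
    have "cmod (blinfun_apply (blinfun_apply Bm k) k) \<le> norm (blinfun_apply Bm k) * norm k" by (rule norm_blinfun)
    also have "\<dots> \<le> norm Bm * norm k * norm k" by (intro mult_right_mono norm_blinfun) auto
    finally show ?thesis using that by simp
  qed
  let ?et = "((0::complex, 0::complex), 1::real)"
  let ?e1 = "((1::complex, 0::complex), 0::real)"
  let ?e2 = "((0::complex, 1::complex), 0::real)"
  have n1: "norm ?et = 1" "norm ?e1 = 1" "norm ?e2 = 1" by (simp_all add: norm_Pair)
  have dd1: "d1 f Z t = blinfun_apply (g1 (Z, t)) ?e1" for Z using link1[OF d1 holo, of Z t 1 0] by simp
  have dd2: "d2 f Z t = blinfun_apply (g1 (Z, t)) ?e2" for Z using link1[OF d1 holo, of Z t 0 1] by simp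
  have eq: "(dt f Z1 t + (fst v * d1 f Z1 t + snd v * d2 f Z1 t) - \<i> * complex_of_real \<kappa> * (d11 f Z1 t + d22 f Z1 t))
    - (dt f Z2 t + (fst v * d1 f Z2 t + snd v * d2 f Z2 t) - \<i> * complex_of_real \<kappa> * (d11 f Z2 t + d22 f Z2 t))
    = blinfun_apply A ?et + (fst v * blinfun_apply A ?e1 + snd v * blinfun_apply A ?e2)
      - \<i> * complex_of_real \<kappa> * (blinfun_apply (blinfun_apply Bm ?e1) ?e1 + blinfun_apply (blinfun_apply Bm ?e2) ?e2)"
    unfolding link_t[OF d1] dd1 dd2 link11[OF d1 d2 holo] link22[OF d1 d2 holo] A_def Bm_def
    by (simp add: blinfun.diff_left algebra_simps)
  have MV0: "0 \<le> MV" using vM norm_ge_zero[of v] by linarith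
  have v1: "cmod (fst v) \<le> MV" "cmod (snd v) \<le> MV"
    using vM norm_fst_le[of "fst v" "snd v"] norm_snd_le[of "snd v" "fst v"] by simp_all
  have "cmod (blinfun_apply A ?et + (fst v * blinfun_apply A ?e1 + snd v * blinfun_apply A ?e2)
      - \<i> * complex_of_real \<kappa> * (blinfun_apply (blinfun_apply Bm ?e1) ?e1 + blinfun_apply (blinfun_apply Bm ?e2) ?e2))
    \<le> norm A + (MV * norm A + MV * norm A) + \<bar>\<kappa>\<bar> * (norm Bm + norm Bm)"
  proof -
    have t1: "cmod (blinfun_apply A ?et) \<le> norm A" by (rule ap1) (simp add: norm_Pair)
    have t2: "cmod (fst v * blinfun_apply A ?e1) \<le> MV * norm A"
      unfolding norm_mult by (intro mult_mono v1 ap1) (auto simp: norm_Pair MV0)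
    have t3: "cmod (snd v * blinfun_apply A ?e2) \<le> MV * norm A"
      unfolding norm_mult by (intro mult_mono v1 ap1) (auto simp: norm_Pair MV0)
    have t4: "cmod (\<i> * complex_of_real \<kappa> * (blinfun_apply (blinfun_apply Bm ?e1) ?e1 + blinfun_apply (blinfun_apply Bm ?e2) ?e2))
      \<le> \<bar>\<kappa>\<bar> * (norm Bm + norm Bm)"
    proof -
      have "cmod (blinfun_apply (blinfun_apply Bm ?e1) ?e1 + blinfun_apply (blinfun_apply Bm ?e2) ?e2) \<le> norm Bm + norm Bm"
        by (rule order_trans[OF norm_triangle_ineq add_mono]) (auto intro!: ap2 simp: norm_Pair)
      then show ?thesis by (simp add: norm_mult mult_left_mono)
    qed
    show ?thesis
      by (rule order_trans[OF norm_triangle_ineq4 add_mono[OF order_trans[OF norm_triangle_ineq add_mono[OF t1 order_trans[OF norm_triangle_ineq add_mono[OF t2 t3]]]] t4]])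
  qed
  also have "\<dots> = (1 + 2 * MV) * norm A + 2 * \<bar>\<kappa>\<bar> * norm Bm" by (simp add: algebra_simps)
  also have "\<dots> \<le> (1 + 2 * MV) * (B2 * norm (Z1 - Z2)) + 2 * \<bar>\<kappa>\<bar> * (B3 * norm (Z1 - Z2))"
  proof (rule add_mono)
    show "(1 + 2 * MV) * norm A \<le> (1 + 2 * MV) * (B2 * norm (Z1 - Z2))" using nA MV0 by (intro mult_left_mono) auto
    show "2 * \<bar>\<kappa>\<bar> * norm Bm \<le> 2 * \<bar>\<kappa>\<bar> * (B3 * norm (Z1 - Z2))" using nB by (intro mult_left_mono) auto
  qed
  also have "\<dots> = (B2 * (1 + 2 * MV) + 2 * \<bar>\<kappa>\<bar> * B3) * norm (Z1 - Z2)" by (simp add: algebra_simps)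
  finally show ?thesis unfolding eq .
qed

lemma bound_on_compact:
  fixes g :: "'a::topological_space \<Rightarrow> 'b::real_normed_vector"
  assumes "compact K" "continuous_on K g"
  shows "\<exists>B\<ge>0. \<forall>x\<in>K. norm (g x) \<le> B"
proof -
  have "bounded (g ` K)" using assms compact_continuous_image compact_imp_bounded by blast
  then obtain B where "\<forall>y\<in>g ` K. norm y \<le> B" by (auto simp: bounded_iff)
  then show ?thesis by (intro exI[of _ "max B 0"]) auto
qed

lemma Ztil_bound:
  assumes eps: "0 < eps" and MV: "\<And>\<tau>. \<tau> \<in> {0..T} \<Longrightarrow> norm (V \<tau>) \<le> MV"
  shows "real n * eps \<le> T \<Longrightarrow> norm (Ztil V Z0 eps n) \<le> norm Z0 + real n * eps * MV"
proof (induction n)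
  case 0 then show ?case by simp
next
  case (Suc n)
  have c: "real (4 * (Suc n div 4)) * eps \<in> {0..T}"
  proof -
    have "real (4 * (Suc n div 4)) \<le> real (Suc n)" by simp
    then have a: "real (4 * (Suc n div 4)) * eps \<le> real (Suc n) * eps" using eps by (intro mult_right_mono) auto
    have b: "real (Suc n) * eps \<le> T" by (rule Suc.prems)
    have z: "0 \<le> real (4 * (Suc n div 4)) * eps" using eps by simp
    show ?thesis unfolding atLeastAtMost_iff by (intro conjI z order_trans[OF a b])
  qed
  have n: "real n * eps \<le> T" using Suc.prems eps by (simp add: algebra_simps)
  have "norm (Ztil V Z0 eps (Suc n)) \<le> norm (Ztil V Z0 eps n) + eps * MV"
    using norm_triangle_ineq[of "Ztil V Z0 eps n" "eps *\<^sub>R V (real (4 * (Suc n div 4)) * eps)"] MV[OF c] eps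
    by (simp add: mult_left_mono order_trans)
  also have "\<dots> \<le> norm Z0 + real (Suc n) * eps * MV" using Suc.IH[OF n] by (simp add: algebra_simps)
  finally show ?case .
qed

lemma gam_facts:
  assumes h: "hbar > 0" and m: "m > 0" and e: "0 < eps" "eps \<le> 1"
  shows "(2 * gam hbar m eps)^2 = 4 * \<i> * complex_of_real (hbar / (2 * m)) * complex_of_real eps"
    and "cmod (2 * gam hbar m eps) \<le> 4 * sqrt (hbar / (4 * m))"
proof -
  define r where "r = sqrt (hbar * eps / (4 * m))"
  have r2: "r^2 = hbar * eps / (4 * m)" unfolding r_def using h m e by simp
  have "(2 * gam hbar m eps)^2 = 4 * (1 + \<i>)^2 * complex_of_real (r^2)"
    by (simp add: gam_def r_def power_mult_distrib)
  also have "\<dots> = 4 * \<i> * complex_of_real (hbar / (2 * m)) * complex_of_real eps"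
    unfolding r2 by (simp add: power2_eq_square field_simps)
  finally show "(2 * gam hbar m eps)^2 = 4 * \<i> * complex_of_real (hbar / (2 * m)) * complex_of_real eps" .
  have a: "cmod (2 * gam hbar m eps) = 2 * cmod (1 + \<i>) * r"
    using h m e by (simp add: gam_def r_def norm_mult)
  have b: "cmod (1 + \<i>) \<le> 2"
    using norm_triangle_ineq[of 1 \<i>] by simp
  have c: "r \<le> sqrt (hbar / (4 * m))"
    unfolding r_def using h m e by (intro real_sqrt_le_mono) (simp add: divide_right_mono mult_left_le)
  have r0: "0 \<le> r" unfolding r_def using h m e by simp
  have "2 * cmod (1 + \<i>) * r \<le> (2 * 2) * sqrt (hbar / (4 * m))"
    using b c r0 by (intro mult_mono) auto
  then show "cmod (2 * gam hbar m eps) \<le> 4 * sqrt (hbar / (4 * m))" using a by simp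
qed

theorem mainTheorem4:
  fixes hbar m :: real
    and f :: "(complex \<times> complex) \<times> real \<Rightarrow> complex"
    and V :: "real \<Rightarrow> complex \<times> complex"
    and Z0 :: "complex \<times> complex"
    and s :: "real \<times> real \<Rightarrow> real \<times> real"
    and Zc :: "real \<Rightarrow> complex \<times> complex"
  assumes hbar: "hbar > 0" and mpos: "m > 0"
    and holo: "\<forall>t. holo2 (\<lambda>Z. f (Z, t))"
    and smooth: "C3 f"
    and V_C1: "\<exists>V'. continuous_on {0..} V' \<and>
                  (\<forall>t\<ge>0. (V has_vector_derivative V' t) (at t within {0..}))"
    and s_choice: "s \<in> {splus, sminus}"
    and Zc_init: "Zc 0 = Z0"
    and Zc_ode: "\<forall>t\<ge>0. (Zc has_vector_derivative V t) (at t within {0..})"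
  shows "(\<forall>T>0. \<exists>C. \<forall>eps q. 0 < eps \<and> eps \<le> 1 \<and> q \<ge> 1 \<and> 4 * real q * eps \<le> T \<longrightarrow>
            norm (Yeps hbar m V Z0 s f eps (4 * q) - Yeps hbar m V Z0 s f eps (4 * q - 1)
                  - complex_of_real eps * Dyn hbar m V f (Ztil V Z0 eps (4 * q)) (4 * real q * eps))
              \<le> C * eps ^ 2)
       \<and> (\<forall>T>0. \<exists>C. \<forall>eps q. 0 < eps \<and> eps \<le> 1 \<and> q \<ge> 1 \<and> 4 * real q * eps \<le> T \<longrightarrow>
            norm (Yeps hbar m V Z0 s f eps (4 * q) - Yeps hbar m V Z0 s f eps (4 * q - 1)
                  - complex_of_real eps * Dyn hbar m V f (Zc (4 * real q * eps)) (4 * real q * eps))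
              \<le> C * eps ^ 2)"
proof -
  obtain g1 :: "(complex \<times> complex) \<times> real \<Rightarrow> ((complex \<times> complex) \<times> real) \<Rightarrow>\<^sub>L complex"
    and g2 :: "(complex \<times> complex) \<times> real \<Rightarrow> ((complex \<times> complex) \<times> real) \<Rightarrow>\<^sub>L (((complex \<times> complex) \<times> real) \<Rightarrow>\<^sub>L complex)"
    and g3 :: "(complex \<times> complex) \<times> real \<Rightarrow> ((complex \<times> complex) \<times> real) \<Rightarrow>\<^sub>L (((complex \<times> complex) \<times> real) \<Rightarrow>\<^sub>L (((complex \<times> complex) \<times> real) \<Rightarrow>\<^sub>L complex))"
    where d1: "\<And>x. (f has_derivative blinfun_apply (g1 x)) (at x)"
      and d2: "\<And>x. (g1 has_derivative blinfun_apply (g2 x)) (at x)"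
      and d3: "\<And>x. (g2 has_derivative blinfun_apply (g3 x)) (at x)"
      and g3c: "continuous_on UNIV g3"
    using smooth unfolding C3_def by blast
  obtain V' where V'c: "continuous_on {0..} V'" and V'd: "\<And>t. t \<ge> 0 \<Longrightarrow> (V has_vector_derivative V' t) (at t within {0..})"
    using V_C1 by blast
  define \<kappa> where "\<kappa> = hbar / (2 * m)"
  define Gm where "Gm = 4 * sqrt (hbar / (4 * m))"
  have main: "\<forall>T>0. \<exists>C. \<forall>eps q. 0 < eps \<and> eps \<le> 1 \<and> q \<ge> 1 \<and> 4 * real q * eps \<le> T \<longrightarrow>
            norm (Yeps hbar m V Z0 s f eps (4 * q) - Yeps hbar m V Z0 s f eps (4 * q - 1)
                  - complex_of_real eps * Dyn hbar m V f (Ztil V Z0 eps (4 * q)) (4 * real q * eps))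
              \<le> C * eps ^ 2 \<and>
            norm (Yeps hbar m V Z0 s f eps (4 * q) - Yeps hbar m V Z0 s f eps (4 * q - 1)
                  - complex_of_real eps * Dyn hbar m V f (Zc (4 * real q * eps)) (4 * real q * eps))
              \<le> C * eps ^ 2"
  proof (intro allI impI)
    fix T :: real assume T: "T > 0"
    have Vc: "continuous_on {0..T} V"
    proof -
      have "continuous_on {0..} V"
        unfolding continuous_on_eq_continuous_within
        using V'd has_vector_derivative_continuous by (metis atLeast_iff)
      then show ?thesis by (rule continuous_on_subset) auto
    qed
    obtain MV where MV0: "MV \<ge> 0" and MV: "\<And>\<tau>. \<tau> \<in> {0..T} \<Longrightarrow> norm (V \<tau>) \<le> MV"
      using bound_on_compact[OF compact_Icc Vc] by blast
    obtain LV where LV0: "LV \<ge> 0" and LV: "\<And>\<tau>. \<tau> \<in> {0..T} \<Longrightarrow> norm (V' \<tau>) \<le> LV"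
      using bound_on_compact[OF compact_Icc continuous_on_subset[OF V'c]] by (meson atLeastAtMost_iff atLeast_iff subsetI)
    have Vlip: "norm (V b - V a) \<le> LV * \<bar>b - a\<bar>" if "a \<in> {0..T}" "b \<in> {0..T}" for a b
    proof (rule vlip[OF _ LV that])
      fix \<tau> assume "\<tau> \<in> {0..T}"
      then show "(V has_vector_derivative V' \<tau>) (at \<tau> within {0..T})"
        using V'd[of \<tau>] by (auto intro: has_vector_derivative_within_subset)
    qed
    define R1 where "R1 = norm Z0 + T * MV + MV + Gm + 1 + 4 * LV * T"
    define S where "S = cball (0::complex \<times> complex) R1 \<times> {0..T}"
    have Sconv: "convex S" unfolding S_def by (intro convex_Times) auto
    have Scomp: "compact S" unfolding S_def by (intro compact_Times) auto
    have fc: "continuous_on S f"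
      using d1 has_derivative_continuous continuous_at_imp_continuous_on by blast
    have g2c: "continuous_on S g2"
      using d3 has_derivative_continuous continuous_at_imp_continuous_on by blast
    obtain B2 where B20: "B2 \<ge> 0" and B2: "\<And>x. x \<in> S \<Longrightarrow> norm (g2 x) \<le> B2"
      using bound_on_compact[OF Scomp g2c] by blast
    obtain B3 where B30: "B3 \<ge> 0" and B3: "\<And>x. x \<in> S \<Longrightarrow> norm (g3 x) \<le> B3"
      using bound_on_compact[OF Scomp continuous_on_subset[OF g3c]] by blast
    obtain M where M0: "M \<ge> 0" and M: "\<And>x. x \<in> S \<Longrightarrow> cmod (f x) \<le> M"
      using bound_on_compact[OF Scomp fc] by blast
    define C1 where "C1 = B2 * MV ^ 2 + 2 * \<bar>\<kappa>\<bar> * B3 * MV + 64 * (M + 1) * \<kappa>^2 + B2 * MV + 4 * \<bar>\<kappa>\<bar> * B3 + B2"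
    define LD where "LD = B2 * (1 + 2 * MV) + 2 * \<bar>\<kappa>\<bar> * B3"
    have LD0: "LD \<ge> 0" unfolding LD_def using B20 B30 MV0 by simp
    show "\<exists>C. \<forall>eps q. 0 < eps \<and> eps \<le> 1 \<and> q \<ge> 1 \<and> 4 * real q * eps \<le> T \<longrightarrow>
            norm (Yeps hbar m V Z0 s f eps (4 * q) - Yeps hbar m V Z0 s f eps (4 * q - 1)
                  - complex_of_real eps * Dyn hbar m V f (Ztil V Z0 eps (4 * q)) (4 * real q * eps))
              \<le> C * eps ^ 2 \<and>
            norm (Yeps hbar m V Z0 s f eps (4 * q) - Yeps hbar m V Z0 s f eps (4 * q - 1)
                  - complex_of_real eps * Dyn hbar m V f (Zc (4 * real q * eps)) (4 * real q * eps))
              \<le> C * eps ^ 2"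
    proof (intro exI[of _ "C1 + LD * 4 * LV * T"] allI impI)
      fix eps :: real and q :: nat
      assume a: "0 < eps \<and> eps \<le> 1 \<and> q \<ge> 1 \<and> 4 * real q * eps \<le> T"
      then have eps: "0 < eps" "eps \<le> 1" and q1: "q \<ge> 1" and tT: "4 * real q * eps \<le> T" by auto
      define t where "t = 4 * real q * eps"
      define Z where "Z = Ztil V Z0 eps (4 * q)"
      define W where "W = Ztil V Z0 eps (4 * q - 1)"
      define v where "v = V t"
      define c where "c = 2 * gam hbar m eps"
      have eps0: "0 \<le> eps" using eps by simp
      have t0: "0 \<le> t" and tT': "t \<le> T" using eps tT by (auto simp: t_def)
      have tn: "real (4 * q) * eps = t" by (simp add: t_def)
      have tm: "real (4 * q - 1) * eps = t - eps" using q1 by (simp add: t_def of_nat_diff algebra_simps)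
      have tme: "0 \<le> t - eps"
      proof -
        have "0 \<le> real (4 * q - 1) * eps" using eps by simp
        then show ?thesis using tm by simp
      qed
      have sq: "4 * q = Suc (4 * q - 1)" using q1 by simp
      have ZW: "Z = W + eps *\<^sub>R v"
      proof -
        have "Z = Ztil V Z0 eps (Suc (4 * q - 1))" unfolding Z_def using sq by simp
        also have "\<dots> = W + eps *\<^sub>R V (real (4 * (Suc (4 * q - 1) div 4)) * eps)" by (simp add: W_def)
        also have "Suc (4 * q - 1) div 4 = q" using sq by (metis nonzero_mult_div_cancel_left zero_neq_numeral)
        finally show ?thesis by (simp add: v_def t_def)
      qed
      have Wd: "W = Z - eps *\<^sub>R v" using ZW by simp
      have vM: "norm v \<le> MV" unfolding v_def using MV t0 tT' by simp
      have nZ: "norm Z \<le> norm Z0 + T * MV"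
      proof -
        have "norm Z \<le> norm Z0 + real (4 * q) * eps * MV" unfolding Z_def
        proof (rule Ztil_bound[where T=T])
          show "\<And>\<tau>. \<tau> \<in> {0..T} \<Longrightarrow> norm (V \<tau>) \<le> MV" by (rule MV)
          show "real (4 * q) * eps \<le> T" unfolding tn by (rule tT')
        qed (rule eps(1))
        also have "\<dots> \<le> norm Z0 + T * MV" unfolding tn using tT' MV0 by (simp add: mult_right_mono)
        finally show ?thesis .
      qed
      have nW: "norm W \<le> norm Z0 + T * MV"
      proof -
        have "norm W \<le> norm Z0 + real (4 * q - 1) * eps * MV" unfolding W_def
        proof (rule Ztil_bound[where T=T])
          show "\<And>\<tau>. \<tau> \<in> {0..T} \<Longrightarrow> norm (V \<tau>) \<le> MV" by (rule MV)
          show "real (4 * q - 1) * eps \<le> T" unfolding tm using tT' eps by linarith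
        qed (rule eps(1))
        also have "\<dots> \<le> norm Z0 + T * MV" unfolding tm using tT' MV0 eps by (simp add: mult_right_mono)
        finally show ?thesis .
      qed
      have hc: "c^2 = 4 * \<i> * complex_of_real \<kappa> * complex_of_real eps"
        unfolding c_def \<kappa>_def by (rule gam_facts(1)[OF hbar mpos eps])
      have cG: "cmod c \<le> Gm" unfolding c_def Gm_def by (rule gam_facts(2)[OF hbar mpos eps])
      have G0: "0 \<le> Gm" using cG norm_ge_zero order_trans by blast
      have inS: "(X, \<tau>) \<in> S" if "norm X \<le> R1" "0 \<le> \<tau>" "\<tau> \<le> T" for X \<tau>
        using that by (simp add: S_def)
      have LVT: "0 \<le> 4 * LV * T" using LV0 T by simp
      have memZ: "(Z, t) \<in> S" using nZ MV0 G0 LVT t0 tT' by (intro inS) (auto simp: R1_def)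
      have memW: "(W, t) \<in> S" using nW MV0 G0 LVT t0 tT' by (intro inS) (auto simp: R1_def)
      have mem1: "((w, snd W), t) \<in> S \<and> ((w, snd W), t - eps) \<in> S" if w: "cmod (w - fst W) \<le> cmod c + 1" for w
      proof -
        have "(w, snd W) = W + (w - fst W, 0)" by (simp add: prod_eq_iff)
        then have "norm (w, snd W) \<le> norm W + norm ((w - fst W, 0::complex))" by (metis norm_triangle_ineq)
        also have "\<dots> \<le> norm Z0 + T * MV + (Gm + 1)" using nW w cG by (simp add: norm_Pair)
        finally have "norm (w, snd W) \<le> R1" using MV0 LVT by (simp add: R1_def)
        then show ?thesis using t0 tT' tme eps0 by (auto intro!: inS)
      qed
      have mem2: "((fst W, w), t) \<in> S \<and> ((fst W, w), t - eps) \<in> S" if w: "cmod (w - snd W) \<le> cmod c + 1" for w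
      proof -
        have "(fst W, w) = W + (0, w - snd W)" by (simp add: prod_eq_iff)
        then have "norm (fst W, w) \<le> norm W + norm ((0::complex, w - snd W))" by (metis norm_triangle_ineq)
        also have "\<dots> \<le> norm Z0 + T * MV + (Gm + 1)" using nW w cG by (simp add: norm_Pair)
        finally have "norm (fst W, w) \<le> R1" using MV0 LVT by (simp add: R1_def)
        then show ?thesis using t0 tT' tme eps0 by (auto intro!: inS)
      qed
      note cr = core[OF d1 d2 d3 holo Sconv B2 B3 M eps0 hc Wd memZ memW mem1 mem2]
      have Y4: "Yeps hbar m V Z0 s f eps (4 * q) = f (Z, t)"
      proof -
        have "(\<Sum>j\<in>{1..4}. f (Zeps hbar m V Z0 s eps j (4 * q), real (4 * q) * eps)) = (\<Sum>j\<in>{1..4::nat}. f (Z, t))"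
        proof (rule sum.cong[OF refl])
          fix j :: nat assume j: "j \<in> {1..4}"
          show "f (Zeps hbar m V Z0 s eps j (4 * q), real (4 * q) * eps) = f (Z, t)"
            unfolding Zeps_Ztil s4k[OF s_choice j] tn Z_def by (simp add: cscale_def flip: zero_prod_def)
        qed
        then show ?thesis unfolding Yeps_def by simp
      qed
      have Y3: "Yeps hbar m V Z0 s f eps (4 * q - 1) = (1/4) * (f ((fst W + c, snd W), t - eps) + f ((fst W - c, snd W), t - eps)
              + f ((fst W, snd W + c), t - eps) + f ((fst W, snd W - c), t - eps))"
      proof -
        have "(\<Sum>j\<in>{1..4}. f (Zeps hbar m V Z0 s eps j (4 * q - 1), real (4 * q - 1) * eps))
            = (\<Sum>j\<in>{1..4::nat}. (\<lambda>Y. f (Y, t - eps)) (W + cscale (gam hbar m eps) ((s ^^ 3) (u j) - u j)))"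
        proof (rule sum.cong[OF refl])
          fix j :: nat assume j: "j \<in> {1..4}"
          show "f (Zeps hbar m V Z0 s eps j (4 * q - 1), real (4 * q - 1) * eps) = (\<lambda>Y. f (Y, t - eps)) (W + cscale (gam hbar m eps) ((s ^^ 3) (u j) - u j))"
            unfolding Zeps_Ztil s4m1[OF s_choice j q1] tm W_def by simp
        qed
        also have "\<dots> = f ((fst W + c, snd W), t - eps) + f ((fst W - c, snd W), t - eps)
              + f ((fst W, snd W + c), t - eps) + f ((fst W, snd W - c), t - eps)"
          using pts[OF s_choice, of "\<lambda>Y. f (Y, t - eps)" W "gam hbar m eps"] unfolding c_def by simp
        finally show ?thesis unfolding Yeps_def by simp
      qed
      have Dy: "Dyn hbar m V f Z t = dt f Z t + (fst v * d1 f Z t + snd v * d2 f Z t) - \<i> * complex_of_real \<kappa> * (d11 f Z t + d22 f Z t)"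
        by (simp add: Dyn_def v_def \<kappa>_def)
      have mono: "B2 * norm v ^ 2 + 2 * \<bar>\<kappa>\<bar> * B3 * norm v + 64 * (M + 1) * \<kappa>^2 + B2 * norm v + 4 * \<bar>\<kappa>\<bar> * B3 + B2 \<le> C1"
        unfolding C1_def using vM B20 B30
        by (intro add_mono mult_left_mono power_mono order_refl) auto
      have part1: "norm (Yeps hbar m V Z0 s f eps (4 * q) - Yeps hbar m V Z0 s f eps (4 * q - 1)
                  - complex_of_real eps * Dyn hbar m V f Z t) \<le> C1 * eps ^ 2"
      proof -
        have "norm (Yeps hbar m V Z0 s f eps (4 * q) - Yeps hbar m V Z0 s f eps (4 * q - 1)
                  - complex_of_real eps * Dyn hbar m V f Z t)
           \<le> eps^2 * (B2 * norm v ^ 2 + 2 * \<bar>\<kappa>\<bar> * B3 * norm v + 64 * (M + 1) * \<kappa>^2 + B2 * norm v + 4 * \<bar>\<kappa>\<bar> * B3 + B2)"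
          unfolding Y4 Y3 Dy by (rule cr)
        also have "\<dots> \<le> eps^2 * C1" using mono by (intro mult_left_mono) auto
        finally show ?thesis by (simp add: mult.commute)
      qed
      have ZZc: "norm (Z - Zc t) \<le> 4 * LV * eps * T"
      proof -
        have "norm (Z - Zc t) \<le> 4 * LV * eps * (real (4 * q) * eps)"
          unfolding Z_def tn[symmetric]
        proof (rule Ztil_Zc[where T=T])
          show "\<And>a b. a \<in> {0..T} \<Longrightarrow> b \<in> {0..T} \<Longrightarrow> norm (V b - V a) \<le> LV * \<bar>b - a\<bar>" by (rule Vlip)
          show "real (4 * q) * eps \<le> T" unfolding tn by (rule tT')
        qed (use eps LV0 Zc_ode Zc_init in auto)
        also have "\<dots> \<le> 4 * LV * eps * T" unfolding tn using tT' LV0 eps by (intro mult_left_mono) auto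
        finally show ?thesis .
      qed
      have nZc: "norm (Zc t) \<le> R1"
      proof -
        have "norm (Zc t) \<le> norm Z + norm (Z - Zc t)" by (metis norm_triangle_sub add.commute norm_minus_commute)
        also have "\<dots> \<le> norm Z0 + T * MV + 4 * LV * T"
        proof (rule add_mono[OF nZ])
          have "4 * LV * eps * T \<le> 4 * LV * 1 * T" using eps LV0 T by (intro mult_right_mono mult_left_mono) auto
          then show "norm (Z - Zc t) \<le> 4 * LV * T" using ZZc by simp
        qed
        finally show ?thesis using MV0 G0 by (simp add: R1_def)
      qed
      have memZc: "(Zc t, t) \<in> S" using nZc t0 tT' by (intro inS)
      have dl: "cmod (Dyn hbar m V f Z t - Dyn hbar m V f (Zc t) t) \<le> LD * norm (Z - Zc t)"
        unfolding Dyn_def LD_def \<kappa>_def[symmetric] v_def[symmetric]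
        by (rule dyn_lip[OF d1 d2 d3 holo Sconv B2 B3 memZ memZc vM])
      have part2: "norm (Yeps hbar m V Z0 s f eps (4 * q) - Yeps hbar m V Z0 s f eps (4 * q - 1)
                  - complex_of_real eps * Dyn hbar m V f (Zc t) t) \<le> (C1 + LD * 4 * LV * T) * eps ^ 2"
      proof -
        let ?Yd = "Yeps hbar m V Z0 s f eps (4 * q) - Yeps hbar m V Z0 s f eps (4 * q - 1)"
        have "?Yd - complex_of_real eps * Dyn hbar m V f (Zc t) t
           = (?Yd - complex_of_real eps * Dyn hbar m V f Z t) + complex_of_real eps * (Dyn hbar m V f Z t - Dyn hbar m V f (Zc t) t)"
          by (simp add: algebra_simps)
        also have "norm \<dots> \<le> C1 * eps ^ 2 + eps * (LD * (4 * LV * eps * T))"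
        proof (rule order_trans[OF norm_triangle_ineq add_mono[OF part1]])
          have "cmod (complex_of_real eps * (Dyn hbar m V f Z t - Dyn hbar m V f (Zc t) t))
              = eps * cmod (Dyn hbar m V f Z t - Dyn hbar m V f (Zc t) t)" using eps by (simp add: norm_mult)
          also have "\<dots> \<le> eps * (LD * (4 * LV * eps * T))"
            using dl ZZc LD0 eps by (intro mult_left_mono order_trans[OF dl] mult_left_mono) auto
          finally show "cmod (complex_of_real eps * (Dyn hbar m V f Z t - Dyn hbar m V f (Zc t) t)) \<le> eps * (LD * (4 * LV * eps * T))" .
        qed
        also have "\<dots> = (C1 + LD * 4 * LV * T) * eps ^ 2" by (simp add: algebra_simps power2_eq_square)
        finally show ?thesis .
      qed
      have "C1 * eps^2 \<le> (C1 + LD * 4 * LV * T) * eps ^ 2"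
        using LD0 LV0 T by (intro mult_right_mono) auto
      then show "norm (Yeps hbar m V Z0 s f eps (4 * q) - Yeps hbar m V Z0 s f eps (4 * q - 1)
                  - complex_of_real eps * Dyn hbar m V f (Ztil V Z0 eps (4 * q)) (4 * real q * eps))
              \<le> (C1 + LD * 4 * LV * T) * eps ^ 2 \<and>
            norm (Yeps hbar m V Z0 s f eps (4 * q) - Yeps hbar m V Z0 s f eps (4 * q - 1)
                  - complex_of_real eps * Dyn hbar m V f (Zc (4 * real q * eps)) (4 * real q * eps))
              \<le> (C1 + LD * 4 * LV * T) * eps ^ 2"
        using part1 part2 unfolding Z_def[symmetric] t_def[symmetric] by linarith
    qed
  qed
  then show ?thesis by blast
qed

end
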